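(* $M\otimes-$ is a functor on $\mathsf{SquaMS}$: for every square metric space $X$, the quotient distance on $M\otimes X$ is a metric, $(M\otimes X,S_{M\otimes X})$ is a square metric space, and for every morphism $f\colon X\to Y$ of $\mathsf{SquaMS}$, $M\otimes f$ is a morphism $M\otimes X\to M\otimes Y$; moreover identities and composition are preserved.
   Context: Let $M_0=\{(r,s)\in[0,1]^2: r\in\{0,1\}\text{ or } s\in\{0,1\}\}$. A square metric space is a pair $(X,S_X)$ with $X$ a metric space with all distances at most $2$ and $S_X\colon M_0\to X$ injective such that (sq1) for $i\in\{0,1\}$, $r,s\in[0,1]$: $d_X(S_X(i,r),S_X(i,s))=|s-r|$ and $d_X(S_X(r,i),S_X(s,i))=|s-r|$; (sq2) $d_X(S_X(r,s),S_X(t,u))\ge|r-t|+|s-u|$. $\mathsf{SquaMS}$: these objects, with short maps $f$ satisfying $f\circ S_X=S_Y$ as morphisms. Let $N=\{0,1,2\}^2$, $M=N\setminus\{(1,1)\}$, also viewed as points of $\mathbb{R}^2$. For $X$ in $\mathsf{SquaMS}$, $M\otimes X=(M\times X)/\!\sim$, where $\sim$ is the equivalence relation generated by $(m,S_X(p))\sim(n,S_X(q))$ whenever $m,n\in M$ differ by exactly $1$ in exactly one coordinate and $(m+p)/3=(n+q)/3$ in $\mathbb{R}^2$; $m\otimes x$ is the class of $(m,x)$. On $M\times X$ put $d((a,u),(b,v))=\frac13 d_X(u,v)$ if $a=b$ and $2$ otherwise; the quotient distance $d(m\otimes x,n\otimes y)$ is the infimum over finite sequences $(m,x)=z_0,\dots,z_k=(n,y)$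 in $M\times X$ of the sum over consecutive pairs of $0$ if they are $\sim$-related and $d(z_i,z_{i+1})$ otherwise. $S_{M\otimes X}(p)=m\otimes S_X(3p-m)$ for any $m\in M$ with $p\in(m+[0,1]^2)/3$, and $(M\otimes f)(m\otimes x)=m\otimes f(x)$. *)

theory Defs
  imports "HOL-Analysis.Analysis"
begin

type_synonym pt = "real \<times> real"

definition metric_on :: "'a set \<Rightarrow> ('a \<Rightarrow> 'a \<Rightarrow> real) \<Rightarrow> bool" where
  "metric_on X d \<longleftrightarrow>
     (\<forall>x\<in>X. \<forall>y\<in>X. 0 \<le> d x y \<and> d x y = d y x \<and> (d x y = 0 \<longleftrightarrow> x = y)) \<and>
     (\<forall>x\<in>X. \<forall>y\<in>X. \<forall>z\<in>X. d x z \<le> d x y + d y z)"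

definition M0 :: "pt set" where
  "M0 = {(r, s). 0 \<le> r \<and> r \<le> 1 \<and> 0 \<le> s \<and> s \<le> 1 \<and> (r \<in> {0, 1} \<or> s \<in> {0, 1})}"

definition squarems :: "'a set \<Rightarrow> ('a \<Rightarrow> 'a \<Rightarrow> real) \<Rightarrow> (pt \<Rightarrow> 'a) \<Rightarrow> bool" where
  "squarems X d S \<longleftrightarrow>
     metric_on X d \<and> (\<forall>x\<in>X. \<forall>y\<in>X. d x y \<le> 2) \<and>
     S ` M0 \<subseteq> X \<and> inj_on S M0 \<and>
     (\<forall>i\<in>{0, 1}. \<forall>r\<in>{0..1}. \<forall>s\<in>{0..1}.
        d (S (i, r)) (S (i, s)) = \<bar>s - r\<bar> \<and> d (S (r, i)) (S (s, i)) = \<bar>s - r\<bar>) \<and>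
     (\<forall>r s t u. (r, s) \<in> M0 \<longrightarrow> (t, u) \<in> M0 \<longrightarrow>
        \<bar>r - t\<bar> + \<bar>s - u\<bar> \<le> d (S (r, s)) (S (t, u)))"

definition squams_hom :: "'a set \<Rightarrow> ('a \<Rightarrow> 'a \<Rightarrow> real) \<Rightarrow> (pt \<Rightarrow> 'a) \<Rightarrow>
    'b set \<Rightarrow> ('b \<Rightarrow> 'b \<Rightarrow> real) \<Rightarrow> (pt \<Rightarrow> 'b) \<Rightarrow> ('a \<Rightarrow> 'b) \<Rightarrow> bool" where
  "squams_hom X dX SX Y dY SY f \<longleftrightarrow>
     f ` X \<subseteq> Y \<and> (\<forall>x\<in>X. \<forall>y\<in>X. dY (f x) (f y) \<le> dX x y) \<and>
     (\<forall>p\<in>M0. f (SX p) = SY p)"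

definition Mset :: "pt set" where
  "Mset = {(a, b). a \<in> {0, 1, 2} \<and> b \<in> {0, 1, 2}} - {(1, 1)}"

definition adjacent :: "pt \<Rightarrow> pt \<Rightarrow> bool" where
  "adjacent m n \<longleftrightarrow>
     (\<bar>fst m - fst n\<bar> = 1 \<and> snd m = snd n) \<or> (fst m = fst n \<and> \<bar>snd m - snd n\<bar> = 1)"

definition basic_rel :: "(pt \<Rightarrow> 'a) \<Rightarrow> ((pt \<times> 'a) \<times> (pt \<times> 'a)) set" where
  "basic_rel S = {((m, S p), (n, S q)) | m n p q.
      m \<in> Mset \<and> n \<in> Mset \<and> adjacent m n \<and> p \<in> M0 \<and> q \<in> M0 \<and>
      (fst m + fst p) / 3 = (fst n + fst q) / 3 \<and> (snd m + snd p) / 3 = (snd n + snd q) / 3}"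

definition tensor_rel :: "'a set \<Rightarrow> (pt \<Rightarrow> 'a) \<Rightarrow> ((pt \<times> 'a) \<times> (pt \<times> 'a)) set" where
  "tensor_rel X S = Id_on (Mset \<times> X) \<union> (basic_rel S \<union> (basic_rel S)\<inverse>)\<^sup>+"

definition tensor_carrier :: "'a set \<Rightarrow> (pt \<Rightarrow> 'a) \<Rightarrow> (pt \<times> 'a) set set" where
  "tensor_carrier X S = (Mset \<times> X) // tensor_rel X S"

definition tensor_class :: "'a set \<Rightarrow> (pt \<Rightarrow> 'a) \<Rightarrow> pt \<Rightarrow> 'a \<Rightarrow> (pt \<times> 'a) set" where
  "tensor_class X S m x = tensor_rel X S `` {(m, x)}"

definition pre_dist :: "('a \<Rightarrow> 'a \<Rightarrow> real) \<Rightarrow> pt \<times> 'a \<Rightarrow> pt \<times> 'a \<Rightarrow> real" where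
  "pre_dist d z w = (if fst z = fst w then d (snd z) (snd w) / 3 else 2)"

fun chain_cost :: "((pt \<times> 'a) \<times> (pt \<times> 'a)) set \<Rightarrow> ('a \<Rightarrow> 'a \<Rightarrow> real) \<Rightarrow> (pt \<times> 'a) list \<Rightarrow> real" where
  "chain_cost E d (a # b # zs) =
     (if (a, b) \<in> E then 0 else pre_dist d a b) + chain_cost E d (b # zs)"
| "chain_cost E d _ = 0"

definition rep_dist :: "'a set \<Rightarrow> ('a \<Rightarrow> 'a \<Rightarrow> real) \<Rightarrow> (pt \<Rightarrow> 'a) \<Rightarrow> pt \<times> 'a \<Rightarrow> pt \<times> 'a \<Rightarrow> real" where
  "rep_dist X d S z w = Inf {chain_cost (tensor_rel X S) d zs | zs.
      zs \<noteq> [] \<and> set zs \<subseteq> Mset \<times> X \<and> hd zs = z \<and> last zs = w}"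

definition tensor_dist :: "'a set \<Rightarrow> ('a \<Rightarrow> 'a \<Rightarrow> real) \<Rightarrow> (pt \<Rightarrow> 'a) \<Rightarrow>
    (pt \<times> 'a) set \<Rightarrow> (pt \<times> 'a) set \<Rightarrow> real" where
  "tensor_dist X d S c c' = rep_dist X d S (SOME z. z \<in> c) (SOME w. w \<in> c')"

definition cell :: "pt \<Rightarrow> pt set" where
  "cell m = {p. 0 \<le> 3 * fst p - fst m \<and> 3 * fst p - fst m \<le> 1 \<and>
               0 \<le> 3 * snd p - snd m \<and> 3 * snd p - snd m \<le> 1}"

definition tensor_S :: "'a set \<Rightarrow> (pt \<Rightarrow> 'a) \<Rightarrow> pt \<Rightarrow> (pt \<times> 'a) set" where
  "tensor_S X S p = (let m = (SOME m. m \<in> Mset \<and> p \<in> cell m)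
     in tensor_class X S m (S (3 * fst p - fst m, 3 * snd p - snd m)))"

definition tensor_map :: "'b set \<Rightarrow> (pt \<Rightarrow> 'b) \<Rightarrow> ('a \<Rightarrow> 'b) \<Rightarrow> (pt \<times> 'a) set \<Rightarrow> (pt \<times> 'b) set" where
  "tensor_map Y SY f c = (let z = (SOME z. z \<in> c) in tensor_class Y SY (fst z) (f (snd z)))"

end

theory Submission
  imports Defs
begin


locale sqms =
  fixes X :: "'a set" and d :: "'a \<Rightarrow> 'a \<Rightarrow> real" and S :: "pt \<Rightarrow> 'a"
  assumes sq: "squarems X d S"
begin

lemma sqp: "metric_on X d" "\<forall>x\<in>X. \<forall>y\<in>X. d x y \<le> 2" "S ` M0 \<subseteq> X" "inj_on S M0"
  "\<forall>i\<in>{0, 1}. \<forall>r\<in>{0..1}. \<forall>s\<in>{0..1}.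
        d (S (i, r)) (S (i, s)) = \<bar>s - r\<bar> \<and> d (S (r, i)) (S (s, i)) = \<bar>s - r\<bar>"
  "\<forall>r s t u. (r, s) \<in> M0 \<longrightarrow> (t, u) \<in> M0 \<longrightarrow>
        \<bar>r - t\<bar> + \<bar>s - u\<bar> \<le> d (S (r, s)) (S (t, u))"
  using sq unfolding squarems_def by simp_all

lemma mp: "\<forall>x\<in>X. \<forall>y\<in>X. 0 \<le> d x y \<and> d x y = d y x \<and> (d x y = 0 \<longleftrightarrow> x = y)"
   "\<forall>x\<in>X. \<forall>y\<in>X. \<forall>z\<in>X. d x z \<le> d x y + d y z"
  using sqp(1) unfolding metric_on_def by simp_all

lemma d_nonneg: "x \<in> X \<Longrightarrow> y \<in> X \<Longrightarrow> 0 \<le> d x y"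
  using mp(1) by simp
lemma d_sym: "x \<in> X \<Longrightarrow> y \<in> X \<Longrightarrow> d x y = d y x"
  using mp(1) by simp
lemma d_zero: "x \<in> X \<Longrightarrow> y \<in> X \<Longrightarrow> (d x y = 0) = (x = y)"
  using mp(1) by simp
lemma d_self: "x \<in> X \<Longrightarrow> d x x = 0"
  using d_zero by blast
lemma d_tri: "x \<in> X \<Longrightarrow> y \<in> X \<Longrightarrow> z \<in> X \<Longrightarrow> d x z \<le> d x y + d y z"
  using mp(2) by simp
lemma d_le2: "x \<in> X \<Longrightarrow> y \<in> X \<Longrightarrow> d x y \<le> 2"
  using sqp(2) by simp
lemma S_in: "p \<in> M0 \<Longrightarrow> S p \<in> X"
  using sqp(3) by blast
lemma S_inj: "inj_on S M0"
  using sqp(4) by blast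
lemma sq1a: "i \<in> {0,1} \<Longrightarrow> r \<in> {0..1} \<Longrightarrow> s \<in> {0..1} \<Longrightarrow> d (S (i, r)) (S (i, s)) = \<bar>s - r\<bar>"
  using sqp(5) by blast
lemma sq1b: "i \<in> {0,1} \<Longrightarrow> r \<in> {0..1} \<Longrightarrow> s \<in> {0..1} \<Longrightarrow> d (S (r, i)) (S (s, i)) = \<bar>s - r\<bar>"
  using sqp(5) by blast
lemma sq2: "p \<in> M0 \<Longrightarrow> q \<in> M0 \<Longrightarrow> \<bar>fst p - fst q\<bar> + \<bar>snd p - snd q\<bar> \<le> d (S p) (S q)"
  using sqp(6) by (cases p; cases q) simp

abbreviation "A \<equiv> Mset \<times> X"
abbreviation "R \<equiv> tensor_rel X S"

lemma basic_in: "(a, b) \<in> basic_rel S \<Longrightarrow> a \<in> A \<and> b \<in> A"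
  unfolding basic_rel_def using S_in by auto

lemma B_in: "(a, b) \<in> (basic_rel S \<union> (basic_rel S)\<inverse>)\<^sup>+ \<Longrightarrow> a \<in> A \<and> b \<in> A"
proof (induction rule: trancl_induct)
  case (base y) then show ?case using basic_in by blast
next
  case (step y z) then show ?case using basic_in by blast
qed

lemma R_sub: "R \<subseteq> A \<times> A"
proof
  fix z assume "z \<in> R"
  then show "z \<in> A \<times> A" unfolding tensor_rel_def
  proof
    assume "z \<in> Id_on A" then show ?thesis by (auto simp: Id_on_def)
  next
    assume "z \<in> (basic_rel S \<union> (basic_rel S)\<inverse>)\<^sup>+"
    then show ?thesis using B_in by (cases z) blast
  qed
qed

lemma R_sym: "sym R"
proof -
  have "sym ((basic_rel S \<union> (basic_rel S)\<inverse>)\<^sup>+)"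
    by (rule sym_trancl) (auto simp: sym_def)
  moreover have "sym (Id_on A)" by (auto simp: sym_def Id_on_def)
  ultimately have "sym (Id_on A) \<and> sym ((basic_rel S \<union> (basic_rel S)\<inverse>)\<^sup>+)" by blast
  then show ?thesis unfolding tensor_rel_def using sym_Un by blast
qed

lemma R_trans: "trans R"
proof (rule transI)
  fix x y z assume a: "(x, y) \<in> R" "(y, z) \<in> R"
  show "(x, z) \<in> R"
  proof (cases "(x, y) \<in> Id_on A")
    case True then show ?thesis using a by (auto simp: Id_on_def)
  next
    case False
    then have xy: "(x, y) \<in> (basic_rel S \<union> (basic_rel S)\<inverse>)\<^sup>+" using a unfolding tensor_rel_def by blast
    show ?thesis
    proof (cases "(y, z) \<in> Id_on A")
      case True then show ?thesis using a by (auto simp: Id_on_def)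
    next
      case False
      then have "(y, z) \<in> (basic_rel S \<union> (basic_rel S)\<inverse>)\<^sup>+" using a unfolding tensor_rel_def by blast
      with xy show ?thesis unfolding tensor_rel_def by (meson UnI2 trancl_trans)
    qed
  qed
qed

lemma R_refl: "z \<in> A \<Longrightarrow> (z, z) \<in> R"
  unfolding tensor_rel_def by auto

lemma R_equiv: "equiv A R"
  unfolding equiv_def refl_on_def using R_sub R_sym R_trans R_refl by auto

lemma class_eq: "tensor_class X S m x = R `` {(m, x)}"
  unfolding tensor_class_def by simp

lemma class_eq_iff: "z \<in> A \<Longrightarrow> w \<in> A \<Longrightarrow> (R `` {z} = R `` {w}) = ((z, w) \<in> R)"
  using R_equiv equiv_class_eq_iff[OF R_equiv] by blast

lemma class_mem: "z \<in> A \<Longrightarrow> z \<in> R `` {z}"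
  using R_refl by auto

lemma basic_R: "(a, b) \<in> basic_rel S \<Longrightarrow> (a, b) \<in> R"
  unfolding tensor_rel_def by auto


lemma pre_nonneg: "a \<in> A \<Longrightarrow> b \<in> A \<Longrightarrow> 0 \<le> pre_dist d a b"
  unfolding pre_dist_def using d_nonneg by auto

lemma pre_sym: "a \<in> A \<Longrightarrow> b \<in> A \<Longrightarrow> pre_dist d a b = pre_dist d b a"
  unfolding pre_dist_def using d_sym by auto

lemma pre_le2: "a \<in> A \<Longrightarrow> b \<in> A \<Longrightarrow> pre_dist d a b \<le> 2"
  unfolding pre_dist_def using d_le2 by fastforce

end

lemma cost_nonneg_gen: "(\<And>a b. a \<in> set zs \<Longrightarrow> b \<in> set zs \<Longrightarrow> 0 \<le> pre_dist d a b) \<Longrightarrow> 0 \<le> chain_cost E d zs"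
  by (induction zs rule: induct_list012) (auto intro!: add_nonneg_nonneg)

lemma cost_append: "chain_cost E d (xs @ b # ys) = chain_cost E d (xs @ [b]) + chain_cost E d (b # ys)"
proof (induction xs)
  case Nil then show ?case by simp
next
  case (Cons a xs)
  then show ?case by (cases xs) auto
qed

lemma cost_rev_gen: "(\<And>a b. a \<in> set zs \<Longrightarrow> b \<in> set zs \<Longrightarrow> pre_dist d a b = pre_dist d b a)
  \<Longrightarrow> (\<And>a b. (a, b) \<in> E \<Longrightarrow> (b, a) \<in> E)
  \<Longrightarrow> chain_cost E d (rev zs) = chain_cost E d zs"
proof (induction zs rule: induct_list012)
  case (3 a b zs)
  have "chain_cost E d (rev (a # b # zs)) = chain_cost E d (rev zs @ b # [a])" by simp
  also have "\<dots> = chain_cost E d (rev zs @ [b]) + chain_cost E d [b, a]" by (rule cost_append)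
  also have "\<dots> = chain_cost E d (b # zs) + chain_cost E d [b, a]" using 3 by simp
  also have "chain_cost E d [b, a] = (if (a, b) \<in> E then 0 else pre_dist d a b)"
    using 3(3,4) by auto
  finally show ?case by simp
qed auto

context sqms begin

lemma cost_nonneg: "set zs \<subseteq> A \<Longrightarrow> 0 \<le> chain_cost R d zs"
  by (rule cost_nonneg_gen) (auto intro!: pre_nonneg)

lemma R_symD: "(a, b) \<in> R \<Longrightarrow> (b, a) \<in> R"
  using R_sym unfolding sym_def by blast

lemma cost_rev: "set zs \<subseteq> A \<Longrightarrow> chain_cost R d (rev zs) = chain_cost R d zs"
  by (rule cost_rev_gen) (auto intro: pre_sym R_symD)


definition "CS z w = {chain_cost R d zs | zs. zs \<noteq> [] \<and> set zs \<subseteq> A \<and> hd zs = z \<and> last zs = w}"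

lemma rd_def': "rep_dist X d S z w = Inf (CS z w)"
  unfolding rep_dist_def CS_def by simp

lemma CS_bdd: "bdd_below (CS z w)"
  unfolding CS_def bdd_below_def using cost_nonneg by blast

lemma CS_ne: "z \<in> A \<Longrightarrow> w \<in> A \<Longrightarrow> CS z w \<noteq> {}"
proof -
  assume "z \<in> A" "w \<in> A"
  then have "chain_cost R d [z, w] \<in> CS z w"
    unfolding CS_def mem_Collect_eq by (intro exI[of _ "[z,w]"]) simp
  then show ?thesis by blast
qed

lemma rd_lower: "zs \<noteq> [] \<Longrightarrow> set zs \<subseteq> A \<Longrightarrow> hd zs = z \<Longrightarrow> last zs = w \<Longrightarrow> rep_dist X d S z w \<le> chain_cost R d zs"
  unfolding rd_def' by (rule cInf_lower[OF _ CS_bdd]) (auto simp: CS_def)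

lemma rd_greatest: "z \<in> A \<Longrightarrow> w \<in> A \<Longrightarrow>
   (\<And>zs. zs \<noteq> [] \<Longrightarrow> set zs \<subseteq> A \<Longrightarrow> hd zs = z \<Longrightarrow> last zs = w \<Longrightarrow> c \<le> chain_cost R d zs)
   \<Longrightarrow> c \<le> rep_dist X d S z w"
  unfolding rd_def' by (rule cInf_greatest[OF CS_ne]) (auto simp: CS_def)

lemma rd_nonneg: "z \<in> A \<Longrightarrow> w \<in> A \<Longrightarrow> 0 \<le> rep_dist X d S z w"
  by (rule rd_greatest) (auto intro: cost_nonneg)

lemma rd_two: "z \<in> A \<Longrightarrow> w \<in> A \<Longrightarrow> rep_dist X d S z w \<le> (if (z, w) \<in> R then 0 else pre_dist d z w)"
  using rd_lower[of "[z, w]" z w] by simp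

lemma rd_pre: "z \<in> A \<Longrightarrow> w \<in> A \<Longrightarrow> rep_dist X d S z w \<le> pre_dist d z w"
  using rd_two pre_nonneg by (smt (verit))

lemma rd_R: "z \<in> A \<Longrightarrow> w \<in> A \<Longrightarrow> (z, w) \<in> R \<Longrightarrow> rep_dist X d S z w = 0"
  using rd_two rd_nonneg by (smt (verit))

lemma rd_le2: "z \<in> A \<Longrightarrow> w \<in> A \<Longrightarrow> rep_dist X d S z w \<le> 2"
  using rd_pre pre_le2 by (smt (verit))

lemma rd_sym_le: "z \<in> A \<Longrightarrow> w \<in> A \<Longrightarrow> rep_dist X d S z w \<le> rep_dist X d S w z"
proof (rule rd_greatest, simp_all)
  fix zs assume h: "zs \<noteq> []" "set zs \<subseteq> A" "hd zs = w" "last zs = z"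
  have "rep_dist X d S z w \<le> chain_cost R d (rev zs)"
    by (rule rd_lower) (use h in \<open>auto simp: hd_rev last_rev\<close>)
  then show "rep_dist X d S z w \<le> chain_cost R d zs" using cost_rev h(2) by simp
qed

lemma rd_sym: "z \<in> A \<Longrightarrow> w \<in> A \<Longrightarrow> rep_dist X d S z w = rep_dist X d S w z"
  using rd_sym_le by (smt (verit))

lemma rd_tri: "z \<in> A \<Longrightarrow> y \<in> A \<Longrightarrow> w \<in> A \<Longrightarrow> rep_dist X d S z w \<le> rep_dist X d S z y + rep_dist X d S y w"
proof -
  assume zA: "z \<in> A" and yA: "y \<in> A" and wA: "w \<in> A"
  have key: "rep_dist X d S z w \<le> chain_cost R d xs + chain_cost R d ys"
    if xs: "xs \<noteq> []" "set xs \<subseteq> A" "hd xs = z" "last xs = y"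
    and ys: "ys \<noteq> []" "set ys \<subseteq> A" "hd ys = y" "last ys = w" for xs ys
  proof -
    obtain xs' where xs': "xs = xs' @ [y]" using xs by (metis append_butlast_last_id)
    obtain ys' where ys': "ys = y # ys'" using ys by (metis list.collapse)
    have "rep_dist X d S z w \<le> chain_cost R d (xs' @ y # ys')"
      by (rule rd_lower) (use xs ys xs' ys' in \<open>auto simp: hd_append\<close>)
    also have "\<dots> = chain_cost R d xs + chain_cost R d ys"
      using cost_append xs' ys' by simp
    finally show ?thesis .
  qed
  have "rep_dist X d S z w - rep_dist X d S z y \<le> chain_cost R d ys"
    if ys: "ys \<noteq> []" "set ys \<subseteq> A" "hd ys = y" "last ys = w" for ys
  proof -
    have "rep_dist X d S z w - chain_cost R d ys \<le> rep_dist X d S z y"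
    proof (rule rd_greatest[OF zA yA])
      fix xs assume "xs \<noteq> []" "set xs \<subseteq> A" "hd xs = z" "last xs = y"
      from key[OF this ys] show "rep_dist X d S z w - chain_cost R d ys \<le> chain_cost R d xs" by simp
    qed
    then show ?thesis by simp
  qed
  then have "rep_dist X d S z w - rep_dist X d S z y \<le> rep_dist X d S y w"
    by (intro rd_greatest[OF yA wA]) auto
  then show ?thesis by simp
qed

lemma rd_resp: "z \<in> A \<Longrightarrow> z' \<in> A \<Longrightarrow> w \<in> A \<Longrightarrow> w' \<in> A \<Longrightarrow> (z, z') \<in> R \<Longrightarrow> (w, w') \<in> R
  \<Longrightarrow> rep_dist X d S z w = rep_dist X d S z' w'"
proof -
  assume h: "z \<in> A" "z' \<in> A" "w \<in> A" "w' \<in> A" "(z, z') \<in> R" "(w, w') \<in> R"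
  have a: "rep_dist X d S z' w' \<le> rep_dist X d S z' z + rep_dist X d S z w + rep_dist X d S w w'"
    using rd_tri[of z' z w'] rd_tri[of z w w'] h by linarith
  have b: "rep_dist X d S z w \<le> rep_dist X d S z z' + rep_dist X d S z' w' + rep_dist X d S w' w"
    using rd_tri[of z z' w] rd_tri[of z' w' w] h by linarith
  have "rep_dist X d S z' z = 0" "rep_dist X d S w w' = 0" "rep_dist X d S z z' = 0" "rep_dist X d S w' w = 0"
    using rd_R[of z' z] rd_R[of w w'] rd_R[of z z'] rd_R[of w' w] h R_symD[of z z'] R_symD[of w w'] by simp_all
  then show ?thesis using a b by simp
qed

lemma some_class: "z \<in> A \<Longrightarrow> (SOME z'. z' \<in> R `` {z}) \<in> R `` {z}"
  by (rule someI[of "\<lambda>z'. z' \<in> R `` {z}" z]) (rule class_mem)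

lemma td_class: "z \<in> A \<Longrightarrow> w \<in> A \<Longrightarrow>
  tensor_dist X d S (tensor_class X S (fst z) (snd z)) (tensor_class X S (fst w) (snd w)) = rep_dist X d S z w"
proof -
  assume zA: "z \<in> A" and wA: "w \<in> A"
  let ?z = "SOME z'. z' \<in> R `` {z}" and ?w = "SOME w'. w' \<in> R `` {w}"
  have z1: "(z, ?z) \<in> R" using some_class[OF zA] by simp
  have w1: "(w, ?w) \<in> R" using some_class[OF wA] by simp
  have "?z \<in> A" "?w \<in> A" using z1 w1 R_sub by auto
  then have "rep_dist X d S z w = rep_dist X d S ?z ?w" using rd_resp[OF zA _ wA _ z1 w1] by simp
  then show ?thesis unfolding tensor_dist_def class_eq by simp
qed


lemma inv_R:
  assumes inv: "\<And>a b. (a, b) \<in> basic_rel S \<Longrightarrow> \<phi> a = \<phi> b" and ab: "(a, b) \<in> R"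
  shows "\<phi> a = \<phi> b"
proof -
  have "\<phi> a = \<phi> b" if "(a, b) \<in> (basic_rel S \<union> (basic_rel S)\<inverse>)\<^sup>+" for a b
    using that
  proof (induction rule: trancl_induct)
    case (base y) then show ?case using inv by (metis Un_iff converse_iff)
  next
    case (step y z) then show ?case using inv by (metis Un_iff converse_iff)
  qed
  moreover have "(a, b) \<in> Id_on A \<or> (a, b) \<in> (basic_rel S \<union> (basic_rel S)\<inverse>)\<^sup>+"
    using ab unfolding tensor_rel_def by blast
  ultimately show ?thesis by (metis Id_onE prod.inject)
qed

lemma phi_chain:
  assumes inv: "\<And>a b. (a, b) \<in> basic_rel S \<Longrightarrow> \<phi> a = \<phi> b"
    and lip: "\<And>a b. a \<in> A \<Longrightarrow> b \<in> A \<Longrightarrow> \<bar>\<phi> a - \<phi> b\<bar> \<le> pre_dist d a b"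
  shows "zs \<noteq> [] \<Longrightarrow> set zs \<subseteq> A \<Longrightarrow> \<bar>\<phi> (hd zs) - \<phi> (last zs)\<bar> \<le> chain_cost R d zs"
proof (induction zs rule: induct_list012)
  case (3 a b zs)
  have "\<bar>\<phi> a - \<phi> b\<bar> \<le> (if (a, b) \<in> R then 0 else pre_dist d a b)"
  proof (cases "(a, b) \<in> R")
    case True then show ?thesis using inv_R[where \<phi>=\<phi>, OF inv True] by simp
  next
    case False then show ?thesis using lip[of a b] 3(4) by simp
  qed
  moreover have "\<bar>\<phi> b - \<phi> (last (b # zs))\<bar> \<le> chain_cost R d (b # zs)"
    using 3 by simp
  ultimately show ?case by simp
qed auto

lemma phi_bound:
  assumes inv: "\<And>a b. (a, b) \<in> basic_rel S \<Longrightarrow> \<phi> a = \<phi> b"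
    and lip: "\<And>a b. a \<in> A \<Longrightarrow> b \<in> A \<Longrightarrow> \<bar>\<phi> a - \<phi> b\<bar> \<le> pre_dist d a b"
    and zA: "z \<in> A" and wA: "w \<in> A"
  shows "\<bar>\<phi> z - \<phi> w\<bar> \<le> rep_dist X d S z w"
  by (rule rd_greatest[OF zA wA]) (use phi_chain[OF inv lip] in force)


end

lemma Mset_D: "k \<in> Mset \<Longrightarrow> (fst k = 0 \<or> fst k = 1 \<or> fst k = 2) \<and> (snd k = 0 \<or> snd k = 1 \<or> snd k = 2) \<and> k \<noteq> (1,1)"
  unfolding Mset_def by auto

lemma M0_D: "p \<in> M0 \<Longrightarrow> 0 \<le> fst p \<and> fst p \<le> 1 \<and> 0 \<le> snd p \<and> snd p \<le> 1 \<and> (fst p = 0 \<or> fst p = 1 \<or> snd p = 0 \<or> snd p = 1)"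
  unfolding M0_def by auto

lemma M0_00: "(0, 0) \<in> M0"
  unfolding M0_def by auto

lemma diag:
  assumes m: "m \<in> Mset" and n: "n \<in> Mset" and p: "p \<in> M0" and q: "q \<in> M0"
    and e1: "fst m + fst p = fst n + fst q" and e2: "snd m + snd p = snd n + snd q"
    and mn: "m \<noteq> n" and na: "\<not> adjacent m n"
  defines "k \<equiv> (if (fst m, snd n) = (1, 1) then (fst n, snd m) else (fst m, snd n))"
  shows "k \<in> Mset \<and> adjacent m k \<and> adjacent k n \<and> (fst m + fst p - fst k, snd m + snd p - snd k) \<in> M0"
proof -
  obtain a b where ab: "m = (a, b)" by (cases m)
  obtain c e where ce: "n = (c, e)" by (cases n)
  obtain p1 p2 where pp: "p = (p1, p2)" by (cases p)
  obtain q1 q2 where qq: "q = (q1, q2)" by (cases q)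
  have ranges: "0 \<le> p1" "p1 \<le> 1" "0 \<le> p2" "p2 \<le> 1" "0 \<le> q1" "q1 \<le> 1" "0 \<le> q2" "q2 \<le> 1"
    using M0_D[OF p] M0_D[OF q] pp qq by auto
  have E1: "a + p1 = c + q1" and E2: "b + p2 = e + q2" using e1 e2 ab ce pp qq by auto
  have A: "a = 0 \<or> a = 1 \<or> a = 2" "b = 0 \<or> b = 1 \<or> b = 2" "(a, b) \<noteq> (1, 1)"
    using Mset_D[OF m] ab by auto
  have C: "c = 0 \<or> c = 1 \<or> c = 2" "e = 0 \<or> e = 1 \<or> e = 2" "(c, e) \<noteq> (1, 1)"
    using Mset_D[OF n] ce by auto
  have "\<bar>a - c\<bar> \<le> 1" "\<bar>b - e\<bar> \<le> 1" using E1 E2 ranges by linarith+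
  then have ac0: "a = c \<or> c = a + 1 \<or> a = c + 1" and be0: "b = e \<or> e = b + 1 \<or> b = e + 1"
    using A(1,2) C(1,2) by auto
  have "a \<noteq> c"
  proof
    assume "a = c"
    then have "b \<noteq> e" using mn ab ce by auto
    then show False using be0 na \<open>a = c\<close> unfolding ab ce adjacent_def by auto
  qed
  then have ac: "c = a + 1 \<or> a = c + 1" using ac0 by auto
  have "b \<noteq> e"
  proof
    assume "b = e"
    then show False using ac na unfolding ab ce adjacent_def by auto
  qed
  then have be: "e = b + 1 \<or> b = e + 1" using be0 by auto
  have "p1 = 1 \<and> q1 = 0 \<or> p1 = 0 \<and> q1 = 1" using ac E1 ranges by auto
  moreover have "p2 = 1 \<and> q2 = 0 \<or> p2 = 0 \<and> q2 = 1" using be E2 ranges by auto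
  moreover have "fst k = a \<or> fst k = c" "snd k = b \<or> snd k = e" unfolding k_def ab ce by auto
  ultimately have km: "fst m + fst p - fst k \<in> {0, 1}" "snd m + snd p - snd k \<in> {0, 1}"
    using ac be E1 E2 unfolding ab pp by auto
  have k1: "k \<in> Mset" using ac be A C unfolding k_def ab ce Mset_def by auto
  have k2: "adjacent m k \<and> adjacent k n" using ac be unfolding k_def ab ce adjacent_def by auto
  have k3: "(fst m + fst p - fst k, snd m + snd p - snd k) \<in> M0"
    using km unfolding M0_def by auto
  show ?thesis using k1 k2 k3 by blast
qed

lemma cell_D: "p \<in> cell m \<Longrightarrow> 0 \<le> 3 * fst p - fst m \<and> 3 * fst p - fst m \<le> 1 \<and> 0 \<le> 3 * snd p - snd m \<and> 3 * snd p - snd m \<le> 1"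
  unfolding cell_def by auto

lemma cell_M0:
  assumes p: "p \<in> M0" and m: "m \<in> Mset" and c: "p \<in> cell m"
  shows "(3 * fst p - fst m, 3 * snd p - snd m) \<in> M0"
proof -
  have P: "0 \<le> fst p \<and> fst p \<le> 1 \<and> 0 \<le> snd p \<and> snd p \<le> 1 \<and> (fst p = 0 \<or> fst p = 1 \<or> snd p = 0 \<or> snd p = 1)"
    using M0_D[OF p] .
  have M: "(fst m = 0 \<or> fst m = 1 \<or> fst m = 2) \<and> (snd m = 0 \<or> snd m = 1 \<or> snd m = 2)" using Mset_D[OF m] by blast
  have C: "0 \<le> 3 * fst p - fst m \<and> 3 * fst p - fst m \<le> 1 \<and> 0 \<le> 3 * snd p - snd m \<and> 3 * snd p - snd m \<le> 1"
    using cell_D[OF c] .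
  have "3 * fst p - fst m = 0 \<or> 3 * fst p - fst m = 1 \<or> 3 * snd p - snd m = 0 \<or> 3 * snd p - snd m = 1"
    using P M C by auto
  then show ?thesis using C unfolding M0_def by auto
qed

lemma cell_adj:
  assumes p: "p \<in> M0" and m: "m \<in> Mset" and m': "m' \<in> Mset" and c: "p \<in> cell m" and c': "p \<in> cell m'"
    and ne: "m \<noteq> m'"
  shows "adjacent m m'"
proof -
  obtain a b where ab: "m = (a, b)" by (cases m)
  obtain a' b' where ab': "m' = (a', b')" by (cases m')
  have P: "0 \<le> fst p \<and> fst p \<le> 1 \<and> 0 \<le> snd p \<and> snd p \<le> 1 \<and> (fst p = 0 \<or> fst p = 1 \<or> snd p = 0 \<or> snd p = 1)"
    using M0_D[OF p] .
  have M: "(a = 0 \<or> a = 1 \<or> a = 2) \<and> (b = 0 \<or> b = 1 \<or> b = 2)" using Mset_D[OF m] ab by auto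
  have M': "(a' = 0 \<or> a' = 1 \<or> a' = 2) \<and> (b' = 0 \<or> b' = 1 \<or> b' = 2)" using Mset_D[OF m'] ab' by auto
  have C: "0 \<le> 3 * fst p - a \<and> 3 * fst p - a \<le> 1 \<and> 0 \<le> 3 * snd p - b \<and> 3 * snd p - b \<le> 1"
    using cell_D[OF c] ab by auto
  have C': "0 \<le> 3 * fst p - a' \<and> 3 * fst p - a' \<le> 1 \<and> 0 \<le> 3 * snd p - b' \<and> 3 * snd p - b' \<le> 1"
    using cell_D[OF c'] ab' by auto
  have d1: "\<bar>a - a'\<bar> \<le> 1" "\<bar>b - b'\<bar> \<le> 1" using C C' by linarith+
  have "a = a' \<or> b = b'"
  proof -
    have "fst p = 0 \<or> fst p = 1 \<or> snd p = 0 \<or> snd p = 1" using P by blast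
    then show ?thesis
    proof (elim disjE)
      assume "fst p = 0" then show ?thesis using C C' M M' by auto
    next
      assume "fst p = 1" then show ?thesis using C C' M M' by auto
    next
      assume "snd p = 0" then show ?thesis using C C' M M' by auto
    next
      assume "snd p = 1" then show ?thesis using C C' M M' by auto
    qed
  qed
  moreover have "a = a' \<or> \<bar>a - a'\<bar> = 1" using d1 M M' by auto
  moreover have "b = b' \<or> \<bar>b - b'\<bar> = 1" using d1 M M' by auto
  ultimately show ?thesis using ne ab ab' unfolding adjacent_def by auto
qed

lemma cell_exists:
  assumes p: "p \<in> M0"
  shows "\<exists>m\<in>Mset. p \<in> cell m"
proof -
  define f :: "real \<Rightarrow> real" where "f t = (if t \<le> 1/3 then 0 else if t \<le> 2/3 then 1 else 2)" for t
  have P: "0 \<le> fst p \<and> fst p \<le> 1 \<and> 0 \<le> snd p \<and> snd p \<le> 1 \<and> (fst p = 0 \<or> fst p = 1 \<or> snd p = 0 \<or> snd p = 1)"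
    using M0_D[OF p] .
  have fr: "f t \<in> {0, 1, 2}" for t unfolding f_def by auto
  have fc: "0 \<le> 3 * t - f t \<and> 3 * t - f t \<le> 1" if "0 \<le> t" "t \<le> 1" for t
    using that unfolding f_def by auto
  have "(f (fst p), f (snd p)) \<noteq> (1, 1)" using P unfolding f_def by auto
  then have "(f (fst p), f (snd p)) \<in> Mset" using fr unfolding Mset_def by auto
  moreover have "p \<in> cell (f (fst p), f (snd p))" using fc P unfolding cell_def by auto
  ultimately show ?thesis by blast
qed


context sqms begin

definition mcs :: "(pt \<Rightarrow> real) \<Rightarrow> 'a \<Rightarrow> real" where
  "mcs G z = min 2 (Inf ((\<lambda>p. G p + d z (S p) / 3) ` M0))"

lemma mcs_props:
  assumes G0: "\<And>p. p \<in> M0 \<Longrightarrow> 0 \<le> G p" and G2: "\<And>p. p \<in> M0 \<Longrightarrow> G p \<le> 2"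
    and GL: "\<And>p q. p \<in> M0 \<Longrightarrow> q \<in> M0 \<Longrightarrow> G p \<le> G q + d (S p) (S q) / 3"
  shows mcs_S: "p0 \<in> M0 \<Longrightarrow> mcs G (S p0) = G p0"
    and mcs_lip: "u \<in> X \<Longrightarrow> v \<in> X \<Longrightarrow> \<bar>mcs G u - mcs G v\<bar> \<le> d u v / 3"
    and mcs_range: "u \<in> X \<Longrightarrow> 0 \<le> mcs G u \<and> mcs G u \<le> 2"
proof -
  let ?I = "\<lambda>z. Inf ((\<lambda>p. G p + d z (S p) / 3) ` M0)"
  have ne: "(\<lambda>p. G p + d z (S p) / 3) ` M0 \<noteq> {}" for z using M0_00 by blast
  have bdd: "bdd_below ((\<lambda>p. G p + d z (S p) / 3) ` M0)" if "z \<in> X" for z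
    unfolding bdd_below_def using G0 d_nonneg S_in that
    by (intro exI[of _ 0]) (auto intro!: add_nonneg_nonneg)
  have low: "?I z \<le> G p + d z (S p) / 3" if "z \<in> X" "p \<in> M0" for z p
    by (rule cInf_lower[OF _ bdd[OF that(1)]]) (use that in auto)
  have I0: "0 \<le> ?I z" if "z \<in> X" for z
    by (rule cInf_greatest[OF ne]) (use G0 d_nonneg S_in that in \<open>auto intro!: add_nonneg_nonneg\<close>)
  show "p0 \<in> M0 \<Longrightarrow> mcs G (S p0) = G p0"
  proof -
    assume p0: "p0 \<in> M0"
    have "?I (S p0) \<le> G p0" using low[OF S_in[OF p0] p0] d_self[OF S_in[OF p0]] by simp
    moreover have "G p0 \<le> ?I (S p0)"
    proof (rule cInf_greatest[OF ne])
      fix x assume "x \<in> (\<lambda>p. G p + d (S p0) (S p) / 3) ` M0"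
      then obtain p where p: "p \<in> M0" "x = G p + d (S p0) (S p) / 3" by blast
      then show "G p0 \<le> x" using GL[OF p0 p(1)] by simp
    qed
    ultimately show ?thesis unfolding mcs_def using G2[OF p0] by simp
  qed
  have lipI: "?I u \<le> ?I v + d u v / 3" if "u \<in> X" "v \<in> X" for u v
  proof -
    have "?I u - d u v / 3 \<le> ?I v"
    proof (rule cInf_greatest[OF ne])
      fix x assume "x \<in> (\<lambda>p. G p + d v (S p) / 3) ` M0"
      then obtain p where p: "p \<in> M0" "x = G p + d v (S p) / 3" by blast
      have "?I u \<le> G p + d u (S p) / 3" by (rule low[OF that(1) p(1)])
      moreover have "d u (S p) \<le> d u v + d v (S p)" using d_tri that S_in p(1) by blast
      ultimately show "?I u - d u v / 3 \<le> x" using p(2) by simp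
    qed
    then show ?thesis by simp
  qed
  show "u \<in> X \<Longrightarrow> v \<in> X \<Longrightarrow> \<bar>mcs G u - mcs G v\<bar> \<le> d u v / 3"
  proof -
    assume uv: "u \<in> X" "v \<in> X"
    have "?I u \<le> ?I v + d u v / 3" "?I v \<le> ?I u + d u v / 3"
      using lipI[OF uv] lipI[OF uv(2,1)] d_sym[OF uv] by auto
    then show ?thesis unfolding mcs_def by linarith
  qed
  show "u \<in> X \<Longrightarrow> 0 \<le> mcs G u \<and> mcs G u \<le> 2"
    using I0 unfolding mcs_def by simp
qed


lemma third_lip: "\<bar>(a + x) / 3 - c\<bar> \<le> \<bar>(a + y) / 3 - c\<bar> + \<bar>x - y\<bar> / 3" for a x y c :: real
proof -
  have e: "(a + x) / 3 - c = ((a + y) / 3 - c) + (x - y) / 3" by (simp add: field_simps)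
  show ?thesis unfolding e using abs_triangle_ineq[of "(a + y) / 3 - c" "(x - y) / 3"] by simp
qed

definition L1 :: "pt \<Rightarrow> pt \<Rightarrow> real" where "L1 P Q = \<bar>fst P - fst Q\<bar> + \<bar>snd P - snd Q\<bar>"
definition pos :: "pt \<Rightarrow> pt \<Rightarrow> pt" where "pos k p = ((fst k + fst p) / 3, (snd k + snd p) / 3)"

lemma pos_unit: "k \<in> Mset \<Longrightarrow> p \<in> M0 \<Longrightarrow> 0 \<le> fst (pos k p) \<and> fst (pos k p) \<le> 1 \<and> 0 \<le> snd (pos k p) \<and> snd (pos k p) \<le> 1"
  using Mset_D[of k] M0_D[of p] unfolding pos_def by auto

lemma L1_bound:
  assumes m: "m \<in> Mset" and n: "n \<in> Mset" and p: "p \<in> M0" and q: "q \<in> M0"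
  shows "L1 (pos m p) (pos n q) \<le> rep_dist X d S (m, S p) (n, S q)"
proof -
  let ?Q = "pos n q"
  define G where "G k p' = L1 (pos k p') ?Q" for k p'
  define \<phi> where "\<phi> z = mcs (G (fst z)) (snd z)" for z
  have Q: "0 \<le> fst ?Q \<and> fst ?Q \<le> 1 \<and> 0 \<le> snd ?Q \<and> snd ?Q \<le> 1" using pos_unit[OF n q] .
  have c0: "0 \<le> G k p'" for k p' unfolding G_def L1_def by simp
  have c2: "G k p' \<le> 2" if "k \<in> Mset" "p' \<in> M0" for k p'
    using pos_unit[OF that] Q unfolding G_def L1_def by (smt (verit))
  have cL: "G k p' \<le> G k q' + d (S p') (S q') / 3" if h: "p' \<in> M0" "q' \<in> M0" for k p' q'
  proof -
    have "G k p' \<le> G k q' + (\<bar>fst p' - fst q'\<bar> + \<bar>snd p' - snd q'\<bar>) / 3"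
      unfolding G_def L1_def pos_def fst_conv snd_conv
      using third_lip[of "fst k" "fst p'" "(fst n + fst q) / 3" "fst q'"] third_lip[of "snd k" "snd p'" "(snd n + snd q) / 3" "snd q'"]
      by (simp only: add_divide_distrib[of "\<bar>fst p' - fst q'\<bar>"])
    then show "G k p' \<le> G k q' + d (S p') (S q') / 3" using sq2[OF h] by (simp add: field_simps)
  qed
  have P1: "mcs (G k) (S p0) = G k p0" if "k \<in> Mset" "p0 \<in> M0" for k p0
    by (rule mcs_S[where G="G k"]) (use c0 c2 cL that in auto)
  have P2: "\<bar>mcs (G k) u - mcs (G k) v\<bar> \<le> d u v / 3" if "k \<in> Mset" "u \<in> X" "v \<in> X" for k u v
    by (rule mcs_lip[where G="G k"]) (use c0 c2 cL that in auto)
  have P3: "0 \<le> mcs (G k) u \<and> mcs (G k) u \<le> 2" if "k \<in> Mset" "u \<in> X" for k u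
    by (rule mcs_range[where G="G k"]) (use c0 c2 cL that in auto)
  have inv: "\<phi> a = \<phi> b" if ab: "(a, b) \<in> basic_rel S" for a b
  proof -
    obtain m' n' p' q' where h: "a = (m', S p')" "b = (n', S q')" "m' \<in> Mset" "n' \<in> Mset"
      "p' \<in> M0" "q' \<in> M0" "(fst m' + fst p') / 3 = (fst n' + fst q') / 3"
      "(snd m' + snd p') / 3 = (snd n' + snd q') / 3"
      using ab unfolding basic_rel_def by blast
    have "\<phi> a = G m' p'" unfolding \<phi>_def h(1) using P1[OF h(3) h(5)] by simp
    moreover have "\<phi> b = G n' q'" unfolding \<phi>_def h(2) using P1[OF h(4) h(6)] by simp
    moreover have "pos m' p' = pos n' q'" unfolding pos_def using h(7,8) by simp
    ultimately show ?thesis unfolding G_def by simp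
  qed
  have lip: "\<bar>\<phi> a - \<phi> b\<bar> \<le> pre_dist d a b" if "a \<in> A" "b \<in> A" for a b
  proof (cases "fst a = fst b")
    case True
    then show ?thesis unfolding \<phi>_def pre_dist_def using P2[of "fst a" "snd a" "snd b"] that
      by (auto simp: mem_Times_iff)
  next
    case False
    have "0 \<le> \<phi> a \<and> \<phi> a \<le> 2" "0 \<le> \<phi> b \<and> \<phi> b \<le> 2"
      unfolding \<phi>_def using P3 that by (auto simp: mem_Times_iff)
    then show ?thesis unfolding pre_dist_def using False by auto
  qed
  have "\<bar>\<phi> (m, S p) - \<phi> (n, S q)\<bar> \<le> rep_dist X d S (m, S p) (n, S q)"
    by (rule phi_bound[OF inv lip]) (use m n p q S_in in auto)
  moreover have "\<phi> (m, S p) = L1 (pos m p) ?Q" unfolding \<phi>_def using P1[OF m p] by (simp add: G_def)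
  moreover have "\<phi> (n, S q) = 0" unfolding \<phi>_def using P1[OF n q] by (simp add: G_def L1_def)
  ultimately show ?thesis by (simp add: L1_def)
qed


lemma basicI: "m \<in> Mset \<Longrightarrow> n \<in> Mset \<Longrightarrow> adjacent m n \<Longrightarrow> p \<in> M0 \<Longrightarrow> q \<in> M0 \<Longrightarrow>
   (fst m + fst p) / 3 = (fst n + fst q) / 3 \<Longrightarrow> (snd m + snd p) / 3 = (snd n + snd q) / 3 \<Longrightarrow>
   ((m, S p), (n, S q)) \<in> basic_rel S"
  unfolding basic_rel_def by blast

lemma glue:
  assumes m: "m \<in> Mset" and n: "n \<in> Mset" and p: "p \<in> M0" and q: "q \<in> M0"
    and e1: "fst m + fst p = fst n + fst q" and e2: "snd m + snd p = snd n + snd q"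
  shows "((m, S p), (n, S q)) \<in> R"
proof (cases "m = n")
  case True
  then have "p = q" using e1 e2 by (simp add: prod_eq_iff)
  then show ?thesis using True R_refl m S_in[OF p] by auto
next
  case mn: False
  show ?thesis
  proof (cases "adjacent m n")
    case True
    then show ?thesis using basicI[OF m n True p q] e1 e2 basic_R by simp
  next
    case na: False
    define k where "k \<equiv> (if (fst m, snd n) = (1, 1) then (fst n, snd m) else (fst m, snd n))"
    define r where "r = (fst m + fst p - fst k, snd m + snd p - snd k)"
    have D: "k \<in> Mset \<and> adjacent m k \<and> adjacent k n \<and> r \<in> M0"
      using diag[OF m n p q e1 e2 mn na] unfolding k_def r_def by simp
    have b1: "((m, S p), (k, S r)) \<in> R"
      by (rule basic_R, rule basicI) (use D m p in \<open>auto simp: r_def\<close>)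
    have b2: "((k, S r), (n, S q)) \<in> R"
      by (rule basic_R, rule basicI) (use D n q e1 e2 in \<open>auto simp: r_def\<close>)
    show ?thesis using R_trans b1 b2 unfolding trans_def by blast
  qed
qed

end

lemma lip_attains_pos:
  fixes h :: "real \<Rightarrow> real"
  assumes lip: "\<And>s t. s \<in> {0..1} \<Longrightarrow> t \<in> {0..1} \<Longrightarrow> \<bar>h s - h t\<bar> \<le> \<bar>s - t\<bar>"
    and pos: "\<And>t. t \<in> {0..1} \<Longrightarrow> 0 < h t"
  shows "\<exists>\<epsilon>>0. \<forall>t\<in>{0..1}. \<epsilon> \<le> h t"
proof -
  have "continuous_on {0..1} h"
    unfolding continuous_on_iff
  proof (intro ballI allI impI)
    fix x e :: real assume x: "x \<in> {0..1}" and e: "0 < e"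
    show "\<exists>d>0. \<forall>x'\<in>{0..1}. dist x' x < d \<longrightarrow> dist (h x') (h x) < e"
    proof (intro exI[of _ e] conjI ballI impI)
      fix x' assume x': "x' \<in> {0..1}" and "dist x' x < e"
      then have "\<bar>x' - x\<bar> < e" by (simp add: dist_real_def)
      moreover have "\<bar>h x' - h x\<bar> \<le> \<bar>x' - x\<bar>" using lip[OF x' x] .
      ultimately show "dist (h x') (h x) < e" by (simp add: dist_real_def)
    qed (rule e)
  qed
  moreover have "{0..1::real} \<noteq> {}" by simp
  ultimately obtain t0 where t0: "t0 \<in> {0..1}" "\<forall>t\<in>{0..1}. h t0 \<le> h t"
    using continuous_attains_inf[OF compact_Icc] by blast
  then show ?thesis using pos[OF t0(1)] by blast
qed

context sqms begin

lemma edge_away: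
  assumes x: "x \<in> X" and nx: "x \<notin> S ` M0"
    and eM: "\<And>t. t \<in> {0..1} \<Longrightarrow> e t \<in> M0"
    and ed: "\<And>s t. s \<in> {0..1} \<Longrightarrow> t \<in> {0..1} \<Longrightarrow> d (S (e s)) (S (e t)) = \<bar>s - t\<bar>"
  shows "\<exists>\<epsilon>>0. \<forall>t\<in>{0..1}. \<epsilon> \<le> d x (S (e t))"
proof (rule lip_attains_pos)
  fix s t :: real assume s: "s \<in> {0..1}" and t: "t \<in> {0..1}"
  have X: "S (e s) \<in> X" "S (e t) \<in> X" using S_in eM s t by auto
  have "d x (S (e s)) \<le> d x (S (e t)) + d (S (e t)) (S (e s))" using d_tri x X by blast
  moreover have "d x (S (e t)) \<le> d x (S (e s)) + d (S (e s)) (S (e t))" using d_tri x X by blast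
  moreover have "d (S (e t)) (S (e s)) = \<bar>s - t\<bar>" "d (S (e s)) (S (e t)) = \<bar>s - t\<bar>"
    using ed[OF t s] ed[OF s t] by auto
  ultimately show "\<bar>d x (S (e s)) - d x (S (e t))\<bar> \<le> \<bar>s - t\<bar>" by linarith
next
  fix t :: real assume t: "t \<in> {0..1}"
  have "S (e t) \<noteq> x" using nx eM[OF t] by blast
  then have "d x (S (e t)) \<noteq> 0" using d_zero x S_in eM[OF t] by blast
  moreover have "0 \<le> d x (S (e t))" using d_nonneg[OF x S_in[OF eM[OF t]]] .
  ultimately show "0 < d x (S (e t))" by linarith
qed

lemma away:
  assumes x: "x \<in> X" and nx: "x \<notin> S ` M0"
  shows "\<exists>\<epsilon>>0. \<forall>p\<in>M0. \<epsilon> \<le> d x (S p)"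
proof -
  have e1: "\<exists>\<epsilon>>0. \<forall>t\<in>{0..1}. \<epsilon> \<le> d x (S (i, t))" if i: "i \<in> {0, 1}" for i
  proof (rule edge_away[OF x nx])
    show "(i, t) \<in> M0" if "t \<in> {0..1}" for t using i that unfolding M0_def by auto
    show "d (S (i, s)) (S (i, t)) = \<bar>s - t\<bar>" if "s \<in> {0..1}" "t \<in> {0..1}" for s t
      using sq1a[OF i that] by (simp add: abs_minus_commute)
  qed
  have e2: "\<exists>\<epsilon>>0. \<forall>t\<in>{0..1}. \<epsilon> \<le> d x (S (t, i))" if i: "i \<in> {0, 1}" for i
  proof (rule edge_away[OF x nx])
    show "(t, i) \<in> M0" if "t \<in> {0..1}" for t using i that unfolding M0_def by auto
    show "d (S (s, i)) (S (t, i)) = \<bar>s - t\<bar>" if "s \<in> {0..1}" "t \<in> {0..1}" for s t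
      using sq1b[OF i that] by (simp add: abs_minus_commute)
  qed
  obtain a0 where a0: "a0 > 0" "\<forall>t\<in>{0..1}. a0 \<le> d x (S (0, t))" using e1[of 0] by auto
  obtain a1 where a1: "a1 > 0" "\<forall>t\<in>{0..1}. a1 \<le> d x (S (1, t))" using e1[of 1] by auto
  obtain b0 where b0: "b0 > 0" "\<forall>t\<in>{0..1}. b0 \<le> d x (S (t, 0))" using e2[of 0] by auto
  obtain b1 where b1: "b1 > 0" "\<forall>t\<in>{0..1}. b1 \<le> d x (S (t, 1))" using e2[of 1] by auto
  define \<epsilon> where "\<epsilon> = min (min a0 a1) (min b0 b1)"
  have "\<epsilon> \<le> d x (S p)" if p: "p \<in> M0" for p
  proof -
    obtain p1 p2 where pp: "p = (p1, p2)" by (cases p)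
    have "p1 \<in> {0..1}" "p2 \<in> {0..1}" "p1 = 0 \<or> p1 = 1 \<or> p2 = 0 \<or> p2 = 1" using M0_D[OF p] pp by auto
    then show ?thesis
    proof (elim disjE)
      assume "p1 = 0" then show ?thesis using a0(2) \<open>p2 \<in> {0..1}\<close> unfolding \<epsilon>_def pp by fastforce
    next
      assume "p1 = 1" then show ?thesis using a1(2) \<open>p2 \<in> {0..1}\<close> unfolding \<epsilon>_def pp by fastforce
    next
      assume "p2 = 0" then show ?thesis using b0(2) \<open>p1 \<in> {0..1}\<close> unfolding \<epsilon>_def pp by fastforce
    next
      assume "p2 = 1" then show ?thesis using b1(2) \<open>p1 \<in> {0..1}\<close> unfolding \<epsilon>_def pp by fastforce
    qed
  qed
  moreover have "\<epsilon> > 0" using a0 a1 b0 b1 unfolding \<epsilon>_def by simp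
  ultimately show ?thesis by blast
qed


lemma caseA:
  assumes mx: "(m, x) \<in> A" and nx: "x \<notin> S ` M0" and w: "w \<in> A" and nr: "((m, x), w) \<notin> R"
  shows "0 < rep_dist X d S (m, x) w"
proof -
  have x: "x \<in> X" using mx by auto
  obtain \<epsilon> where e: "\<epsilon> > 0" "\<forall>p\<in>M0. \<epsilon> \<le> d x (S p)" using away[OF x nx] by blast
  define e' where "e' = min (\<epsilon> / 3) 2"
  have e'0: "0 < e'" using e(1) unfolding e'_def by simp
  define \<phi> where "\<phi> z = (if fst z = m then max 0 (e' - d (snd z) x / 3) else 0)" for z
  have zero: "\<phi> (k, S p) = 0" if p: "p \<in> M0" for k p
  proof -
    have "\<epsilon> \<le> d x (S p)" using e(2) p by blast
    then have "\<epsilon> \<le> d (S p) x" using d_sym[OF x S_in[OF p]] by linarith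
    then have "e' \<le> d (S p) x / 3" unfolding e'_def by simp
    then show ?thesis unfolding \<phi>_def by simp
  qed
  have inv: "\<phi> a = \<phi> b" if ab: "(a, b) \<in> basic_rel S" for a b
  proof -
    obtain m' n' p' q' where h: "a = (m', S p')" "b = (n', S q')" "p' \<in> M0" "q' \<in> M0"
      using ab unfolding basic_rel_def by blast
    show ?thesis using zero h by simp
  qed
  have rng: "0 \<le> \<phi> z \<and> \<phi> z \<le> e'" if "z \<in> A" for z
    unfolding \<phi>_def using e'0 d_nonneg[of "snd z" x] x that by (auto simp: mem_Times_iff)
  have lip: "\<bar>\<phi> a - \<phi> b\<bar> \<le> pre_dist d a b" if a: "a \<in> A" and b: "b \<in> A" for a b
  proof (cases "fst a = fst b")
    case True
    have ua: "snd a \<in> X" "snd b \<in> X" using a b by (auto simp: mem_Times_iff)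
    have t1: "d (snd a) x \<le> d (snd a) (snd b) + d (snd b) x" using d_tri ua x by blast
    have t2: "d (snd b) x \<le> d (snd b) (snd a) + d (snd a) x" using d_tri ua x by blast
    have sy: "d (snd b) (snd a) = d (snd a) (snd b)" using d_sym ua by blast
    have "\<bar>max 0 (e' - d (snd a) x / 3) - max 0 (e' - d (snd b) x / 3)\<bar> \<le> d (snd a) (snd b) / 3"
      using t1 t2 sy by (simp add: max_def abs_if field_simps)
    then show ?thesis unfolding \<phi>_def pre_dist_def using True d_nonneg[OF ua] by auto
  next
    case False
    have "e' \<le> 2" unfolding e'_def by simp
    then show ?thesis unfolding pre_dist_def using False rng[OF a] rng[OF b] by auto
  qed
  have b: "\<bar>\<phi> (m, x) - \<phi> w\<bar> \<le> rep_dist X d S (m, x) w" by (rule phi_bound[OF inv lip mx w])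
  have px: "\<phi> (m, x) = e'" unfolding \<phi>_def using d_self[OF x] e'0 by simp
  have pw: "\<phi> w < e'"
  proof (cases "fst w = m")
    case True
    have "snd w \<noteq> x"
    proof
      assume "snd w = x"
      then have "w = (m, x)" using True by (simp add: prod_eq_iff)
      then show False using nr R_refl mx by simp
    qed
    then have "d (snd w) x \<noteq> 0" using d_zero w x by (auto simp: mem_Times_iff)
    moreover have "0 \<le> d (snd w) x" using d_nonneg w x by (auto simp: mem_Times_iff)
    ultimately have "0 < d (snd w) x" by linarith
    then show ?thesis unfolding \<phi>_def using True e'0 by simp
  next
    case False then show ?thesis unfolding \<phi>_def using e'0 by simp
  qed
  show ?thesis using b px pw by linarith
qed

lemma rd_pos:
  assumes z: "z \<in> A" and w: "w \<in> A" and nr: "(z, w) \<notin> R"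
  shows "0 < rep_dist X d S z w"
proof -
  obtain m x where zz: "z = (m, x)" by (cases z)
  obtain n y where ww: "w = (n, y)" by (cases w)
  show ?thesis
  proof (cases "x \<in> S ` M0")
    case False then show ?thesis using caseA z w nr zz by blast
  next
    case xin: True
    show ?thesis
    proof (cases "y \<in> S ` M0")
      case False
      have "(w, z) \<notin> R" using nr R_symD by blast
      then have "0 < rep_dist X d S w z" using caseA w z False ww by blast
      then show ?thesis using rd_sym z w by simp
    next
      case yin: True
      obtain p where p: "p \<in> M0" "x = S p" using xin by blast
      obtain q where q: "q \<in> M0" "y = S q" using yin by blast
      have m: "m \<in> Mset" and n: "n \<in> Mset" using z w zz ww by auto
      show ?thesis
      proof (cases "pos m p = pos n q")
        case True
        then have "fst m + fst p = fst n + fst q" "snd m + snd p = snd n + snd q"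
          unfolding pos_def by (simp_all add: prod_eq_iff)
        then have "((m, S p), (n, S q)) \<in> R" by (rule glue[OF m n p(1) q(1)])
        then show ?thesis using nr zz ww p q by simp
      next
        case False
        then have "0 < L1 (pos m p) (pos n q)" unfolding L1_def by (auto simp: prod_eq_iff)
        then show ?thesis using L1_bound[OF m n p(1) q(1)] zz ww p q by simp
      qed
    qed
  qed
qed


lemma class_eqI: "z \<in> A \<Longrightarrow> w \<in> A \<Longrightarrow> (z, w) \<in> R \<Longrightarrow> tensor_class X S (fst z) (snd z) = tensor_class X S (fst w) (snd w)"
  using class_eq_iff class_eq by simp

lemma tS_eq:
  assumes p: "p \<in> M0" and m: "m \<in> Mset" and c: "p \<in> cell m"
  shows "tensor_S X S p = tensor_class X S m (S (3 * fst p - fst m, 3 * snd p - snd m))"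
proof -
  define m' where "m' = (SOME m. m \<in> Mset \<and> p \<in> cell m)"
  have m': "m' \<in> Mset \<and> p \<in> cell m'" unfolding m'_def by (rule someI[of _ m]) (use m c in simp)
  have ts: "tensor_S X S p = tensor_class X S m' (S (3 * fst p - fst m', 3 * snd p - snd m'))"
    unfolding tensor_S_def m'_def Let_def by simp
  show ?thesis
  proof (cases "m = m'")
    case True then show ?thesis using ts by simp
  next
    case False
    let ?r = "(3 * fst p - fst m, 3 * snd p - snd m)" and ?r' = "(3 * fst p - fst m', 3 * snd p - snd m')"
    have r: "?r \<in> M0" using cell_M0[OF p m c] .
    have r': "?r' \<in> M0" using cell_M0[OF p] m' by blast
    have adj: "adjacent m m'" using cell_adj[OF p m _ c _ False] m' by blast
    have "((m, S ?r), (m', S ?r')) \<in> R"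
      by (rule basic_R, rule basicI[OF m _ adj r r']) (use m' in auto)
    then have "tensor_class X S m (S ?r) = tensor_class X S m' (S ?r')"
      using class_eqI[of "(m, S ?r)" "(m', S ?r')"] m m' S_in[OF r] S_in[OF r'] by auto
    then show ?thesis using ts by simp
  qed
qed

lemma carrier_E: "c \<in> tensor_carrier X S \<Longrightarrow> \<exists>z\<in>A. c = tensor_class X S (fst z) (snd z)"
  unfolding tensor_carrier_def using class_eq by (auto elim!: quotientE)

lemma carrier_I: "z \<in> A \<Longrightarrow> tensor_class X S (fst z) (snd z) \<in> tensor_carrier X S"
  unfolding tensor_carrier_def using class_eq by (auto intro!: quotientI)

lemma metric: "metric_on (tensor_carrier X S) (tensor_dist X d S)"
  unfolding metric_on_def
proof (intro conjI ballI)
  fix c c' assume c: "c \<in> tensor_carrier X S" and c': "c' \<in> tensor_carrier X S"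
  obtain z where z: "z \<in> A" "c = tensor_class X S (fst z) (snd z)" using carrier_E[OF c] by blast
  obtain w where w: "w \<in> A" "c' = tensor_class X S (fst w) (snd w)" using carrier_E[OF c'] by blast
  have e1: "tensor_dist X d S c c' = rep_dist X d S z w" using td_class z w by simp
  have e2: "tensor_dist X d S c' c = rep_dist X d S w z" using td_class z w by simp
  show "0 \<le> tensor_dist X d S c c'" using e1 rd_nonneg z w by simp
  show "tensor_dist X d S c c' = tensor_dist X d S c' c" using e1 e2 rd_sym z w by simp
  have "(c = c') = ((z, w) \<in> R)" using class_eq_iff z w class_eq by simp
  moreover have "(rep_dist X d S z w = 0) = ((z, w) \<in> R)"
    using rd_R[OF z(1) w(1)] rd_pos[OF z(1) w(1)] by force
  ultimately show "(tensor_dist X d S c c' = 0) = (c = c')" using e1 by simp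
next
  fix c c' c'' assume c: "c \<in> tensor_carrier X S" and c': "c' \<in> tensor_carrier X S" and c'': "c'' \<in> tensor_carrier X S"
  obtain z where z: "z \<in> A" "c = tensor_class X S (fst z) (snd z)" using carrier_E[OF c] by blast
  obtain w where w: "w \<in> A" "c' = tensor_class X S (fst w) (snd w)" using carrier_E[OF c'] by blast
  obtain y where y: "y \<in> A" "c'' = tensor_class X S (fst y) (snd y)" using carrier_E[OF c''] by blast
  show "tensor_dist X d S c c'' \<le> tensor_dist X d S c c' + tensor_dist X d S c' c''"
    using td_class z w y rd_tri[OF z(1) w(1) y(1)] by simp
qed

definition cellof :: "pt \<Rightarrow> pt" where "cellof p = (SOME m. m \<in> Mset \<and> p \<in> cell m)"
definition rep :: "pt \<Rightarrow> pt \<times> 'a" where "rep p = (cellof p, S (3 * fst p - fst (cellof p), 3 * snd p - snd (cellof p)))"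

lemma cellof: "p \<in> M0 \<Longrightarrow> cellof p \<in> Mset \<and> p \<in> cell (cellof p)"
  unfolding cellof_def using cell_exists by (metis (mono_tags, lifting) someI)

lemma rep_A: "p \<in> M0 \<Longrightarrow> rep p \<in> A"
  unfolding rep_def using cellof cell_M0 S_in by auto

lemma tS_rep: "p \<in> M0 \<Longrightarrow> tensor_S X S p = tensor_class X S (fst (rep p)) (snd (rep p))"
  using tS_eq cellof unfolding rep_def by auto

lemma td_S: "a \<in> M0 \<Longrightarrow> b \<in> M0 \<Longrightarrow> tensor_dist X d S (tensor_S X S a) (tensor_S X S b) = rep_dist X d S (rep a) (rep b)"
  using tS_rep td_class rep_A by simp

lemma td_S_ge: "a \<in> M0 \<Longrightarrow> b \<in> M0 \<Longrightarrow> \<bar>fst a - fst b\<bar> + \<bar>snd a - snd b\<bar> \<le> tensor_dist X d S (tensor_S X S a) (tensor_S X S b)"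
proof -
  assume a: "a \<in> M0" and b: "b \<in> M0"
  let ?ra = "(3 * fst a - fst (cellof a), 3 * snd a - snd (cellof a))"
  let ?rb = "(3 * fst b - fst (cellof b), 3 * snd b - snd (cellof b))"
  have "L1 (pos (cellof a) ?ra) (pos (cellof b) ?rb) \<le> rep_dist X d S (cellof a, S ?ra) (cellof b, S ?rb)"
    by (rule L1_bound) (use cellof[OF a] cellof[OF b] cell_M0 a b in auto)
  moreover have "pos (cellof a) ?ra = a" "pos (cellof b) ?rb = b" unfolding pos_def by auto
  ultimately show ?thesis using td_S[OF a b] unfolding rep_def L1_def by simp
qed


end

lemma thirds:
  fixes D :: "real \<Rightarrow> real \<Rightarrow> real"
  assumes sym: "\<And>r s. r \<in> {0..1} \<Longrightarrow> s \<in> {0..1} \<Longrightarrow> D r s = D s r"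
    and tri: "\<And>r s t. r \<in> {0..1} \<Longrightarrow> s \<in> {0..1} \<Longrightarrow> t \<in> {0..1} \<Longrightarrow> D r t \<le> D r s + D s t"
    and loc: "\<And>j r s. j \<in> {0, 1, 2} \<Longrightarrow> r \<in> {j/3..(j+1)/3} \<Longrightarrow> s \<in> {j/3..(j+1)/3} \<Longrightarrow> D r s \<le> \<bar>r - s\<bar>"
    and r: "r \<in> {0..1}" and s: "s \<in> {0..1}"
  shows "D r s \<le> \<bar>r - s\<bar>"
proof -
  have l0: "D r s \<le> \<bar>r - s\<bar>" if "r \<in> {0..1/3}" "s \<in> {0..1/3}" for r s
    using loc[of 0 r s] that by simp
  have l1: "D r s \<le> \<bar>r - s\<bar>" if "r \<in> {1/3..2/3}" "s \<in> {1/3..2/3}" for r s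
    using loc[of 1 r s] that by simp
  have l2: "D r s \<le> \<bar>r - s\<bar>" if "r \<in> {2/3..1}" "s \<in> {2/3..1}" for r s
    using loc[of 2 r s] that by simp
  have main: "D r s \<le> s - r" if rs: "r \<le> s" "r \<in> {0..1}" "s \<in> {0..1}" for r s
  proof -
    have I: "1/3 \<in> {0..1::real}" "2/3 \<in> {0..1::real}" by auto
    consider "s \<le> 1/3" | "2/3 \<le> r" | "1/3 \<le> r" "s \<le> 2/3" | "r \<le> 1/3" "1/3 \<le> s" "s \<le> 2/3"
      | "1/3 \<le> r" "r \<le> 2/3" "2/3 \<le> s" | "r \<le> 1/3" "2/3 \<le> s" using rs by linarith
    then show ?thesis
    proof cases
      case 1 then show ?thesis using l0[of r s] rs by auto
    next
      case 2 then show ?thesis using l2[of r s] rs by auto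
    next
      case 3 then show ?thesis using l1[of r s] rs by auto
    next
      case 4
      have "D r s \<le> D r (1/3) + D (1/3) s" using tri[OF rs(2) I(1) rs(3)] .
      moreover have "D r (1/3) \<le> 1/3 - r" using l0[of r "1/3"] 4 rs by auto
      moreover have "D (1/3) s \<le> s - 1/3" using l1[of "1/3" s] 4 rs by auto
      ultimately show ?thesis by linarith
    next
      case 5
      have "D r s \<le> D r (2/3) + D (2/3) s" using tri[OF rs(2) I(2) rs(3)] .
      moreover have "D r (2/3) \<le> 2/3 - r" using l1[of r "2/3"] 5 rs by auto
      moreover have "D (2/3) s \<le> s - 2/3" using l2[of "2/3" s] 5 rs by auto
      ultimately show ?thesis by linarith
    next
      case 6
      have "D r s \<le> D r (1/3) + D (1/3) s" using tri[OF rs(2) I(1) rs(3)] .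
      moreover have "D (1/3) s \<le> D (1/3) (2/3) + D (2/3) s" using tri[OF I(1) I(2) rs(3)] .
      moreover have "D r (1/3) \<le> 1/3 - r" using l0[of r "1/3"] 6 rs by auto
      moreover have "D (1/3) (2/3) \<le> 1/3" using l1[of "1/3" "2/3"] by auto
      moreover have "D (2/3) s \<le> s - 2/3" using l2[of "2/3" s] 6 rs by auto
      ultimately show ?thesis by linarith
    qed
  qed
  show ?thesis
  proof (cases "r \<le> s")
    case True then show ?thesis using main[OF True r s] by simp
  next
    case False
    then have "D s r \<le> r - s" using main[of s r] r s by simp
    then show ?thesis using sym[OF r s] False by simp
  qed
qed

context sqms begin

lemma abs3: "\<bar>(3 * s - j) - (3 * r - j)\<bar> / 3 = \<bar>r - s\<bar>" for r s j :: real
proof -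
  have "(3 * s - j) - (3 * r - j) = 3 * (s - r)" by simp
  moreover have "\<bar>3 * (s - r)\<bar> = 3 * \<bar>s - r\<bar>" unfolding abs_mult by simp
  ultimately have "\<bar>(3 * s - j) - (3 * r - j)\<bar> = 3 * \<bar>r - s\<bar>" by (simp only: abs_minus_commute)
  then show ?thesis by simp
qed

lemma tS_carrier: "p \<in> M0 \<Longrightarrow> tensor_S X S p \<in> tensor_carrier X S"
  using tS_rep carrier_I rep_A by simp

lemma metricD:
  "c \<in> tensor_carrier X S \<Longrightarrow> c' \<in> tensor_carrier X S \<Longrightarrow> tensor_dist X d S c c' = tensor_dist X d S c' c"
  "c \<in> tensor_carrier X S \<Longrightarrow> c' \<in> tensor_carrier X S \<Longrightarrow> c'' \<in> tensor_carrier X S \<Longrightarrow>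
     tensor_dist X d S c c'' \<le> tensor_dist X d S c c' + tensor_dist X d S c' c''"
  "c \<in> tensor_carrier X S \<Longrightarrow> c' \<in> tensor_carrier X S \<Longrightarrow> (tensor_dist X d S c c' = 0) = (c = c')"
  using metric unfolding metric_on_def by blast+

lemma edge_bound:
  assumes e: "\<And>t. t \<in> {0..1} \<Longrightarrow> E t \<in> M0"
    and loc: "\<And>j r s. j \<in> {0, 1, 2} \<Longrightarrow> r \<in> {j/3..(j+1)/3} \<Longrightarrow> s \<in> {j/3..(j+1)/3} \<Longrightarrow>
       tensor_dist X d S (tensor_S X S (E r)) (tensor_S X S (E s)) \<le> \<bar>r - s\<bar>"
    and r: "r \<in> {0..1}" and s: "s \<in> {0..1}"
  shows "tensor_dist X d S (tensor_S X S (E r)) (tensor_S X S (E s)) \<le> \<bar>r - s\<bar>"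
proof (rule thirds[where D="\<lambda>r s. tensor_dist X d S (tensor_S X S (E r)) (tensor_S X S (E s))", OF _ _ loc r s])
  show "tensor_dist X d S (tensor_S X S (E r)) (tensor_S X S (E s)) = tensor_dist X d S (tensor_S X S (E s)) (tensor_S X S (E r))"
    if "r \<in> {0..1}" "s \<in> {0..1}" for r s
    using metricD(1) tS_carrier e that by blast
  show "tensor_dist X d S (tensor_S X S (E r)) (tensor_S X S (E t)) \<le> tensor_dist X d S (tensor_S X S (E r)) (tensor_S X S (E s)) + tensor_dist X d S (tensor_S X S (E s)) (tensor_S X S (E t))"
    if "r \<in> {0..1}" "s \<in> {0..1}" "t \<in> {0..1}" for r s t
    using metricD(2) tS_carrier e that by blast
qed auto

lemma local_a:
  assumes i: "i \<in> {0, 1}" and j: "j \<in> {0, 1, 2}" and r: "r \<in> {j/3..(j+1)/3}" and s: "s \<in> {j/3..(j+1)/3}"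
  shows "tensor_dist X d S (tensor_S X S (i, r)) (tensor_S X S (i, s)) \<le> \<bar>r - s\<bar>"
proof -
  let ?m = "(2 * i, j)"
  have m: "?m \<in> Mset" using i j unfolding Mset_def by auto
  have r01: "3 * r - j \<in> {0..1}" and s01: "3 * s - j \<in> {0..1}" using r s by (auto simp: field_simps)
  have rc: "(i, r) \<in> cell ?m" and sc: "(i, s) \<in> cell ?m" using i r01 s01 unfolding cell_def by auto
  have rM: "(i, r) \<in> M0" and sM: "(i, s) \<in> M0" using i r s j unfolding M0_def by auto
  have ii: "3 * i - 2 * i = i" by simp
  have "tensor_S X S (i, r) = tensor_class X S ?m (S (i, 3 * r - j))" using tS_eq[OF rM m rc] ii by simp
  moreover have "tensor_S X S (i, s) = tensor_class X S ?m (S (i, 3 * s - j))" using tS_eq[OF sM m sc] ii by simp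
  moreover have iM: "(i, 3 * r - j) \<in> M0" "(i, 3 * s - j) \<in> M0" using i r01 s01 unfolding M0_def by auto
  ultimately have "tensor_dist X d S (tensor_S X S (i, r)) (tensor_S X S (i, s))
      = rep_dist X d S (?m, S (i, 3 * r - j)) (?m, S (i, 3 * s - j))"
    using td_class[of "(?m, S (i, 3 * r - j))" "(?m, S (i, 3 * s - j))"] m S_in by simp
  also have "\<dots> \<le> pre_dist d (?m, S (i, 3 * r - j)) (?m, S (i, 3 * s - j))"
    by (rule rd_pre) (use m S_in iM in auto)
  also have "\<dots> = \<bar>(3 * s - j) - (3 * r - j)\<bar> / 3" unfolding pre_dist_def using sq1a[OF i r01 s01] by simp
  also have "\<dots> = \<bar>r - s\<bar>" by (rule abs3)
  finally show ?thesis .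
qed

lemma local_b:
  assumes i: "i \<in> {0, 1}" and j: "j \<in> {0, 1, 2}" and r: "r \<in> {j/3..(j+1)/3}" and s: "s \<in> {j/3..(j+1)/3}"
  shows "tensor_dist X d S (tensor_S X S (r, i)) (tensor_S X S (s, i)) \<le> \<bar>r - s\<bar>"
proof -
  let ?m = "(j, 2 * i)"
  have m: "?m \<in> Mset" using i j unfolding Mset_def by auto
  have r01: "3 * r - j \<in> {0..1}" and s01: "3 * s - j \<in> {0..1}" using r s by (auto simp: field_simps)
  have rc: "(r, i) \<in> cell ?m" and sc: "(s, i) \<in> cell ?m" using i r01 s01 unfolding cell_def by auto
  have rM: "(r, i) \<in> M0" and sM: "(s, i) \<in> M0" using i r s j unfolding M0_def by auto
  have ii: "3 * i - 2 * i = i" by simp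
  have "tensor_S X S (r, i) = tensor_class X S ?m (S (3 * r - j, i))" using tS_eq[OF rM m rc] ii by simp
  moreover have "tensor_S X S (s, i) = tensor_class X S ?m (S (3 * s - j, i))" using tS_eq[OF sM m sc] ii by simp
  moreover have iM: "(3 * r - j, i) \<in> M0" "(3 * s - j, i) \<in> M0" using i r01 s01 unfolding M0_def by auto
  ultimately have "tensor_dist X d S (tensor_S X S (r, i)) (tensor_S X S (s, i))
      = rep_dist X d S (?m, S (3 * r - j, i)) (?m, S (3 * s - j, i))"
    using td_class[of "(?m, S (3 * r - j, i))" "(?m, S (3 * s - j, i))"] m S_in by simp
  also have "\<dots> \<le> pre_dist d (?m, S (3 * r - j, i)) (?m, S (3 * s - j, i))"
    by (rule rd_pre) (use m S_in iM in auto)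
  also have "\<dots> = \<bar>(3 * s - j) - (3 * r - j)\<bar> / 3" unfolding pre_dist_def using sq1b[OF i r01 s01] by simp
  also have "\<dots> = \<bar>r - s\<bar>" by (rule abs3)
  finally show ?thesis .
qed

lemma tensor_squarems: "squarems (tensor_carrier X S) (tensor_dist X d S) (tensor_S X S)"
  unfolding squarems_def
proof (intro conjI ballI allI impI)
  show "metric_on (tensor_carrier X S) (tensor_dist X d S)" by (rule metric)
  show "tensor_dist X d S c c' \<le> 2" if cc: "c \<in> tensor_carrier X S" "c' \<in> tensor_carrier X S" for c c'
  proof -
    obtain z where z: "z \<in> A" "c = tensor_class X S (fst z) (snd z)" using carrier_E cc(1) by blast
    obtain w where w: "w \<in> A" "c' = tensor_class X S (fst w) (snd w)" using carrier_E cc(2) by blast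
    show ?thesis using td_class z w rd_le2 by simp
  qed
  show "tensor_S X S ` M0 \<subseteq> tensor_carrier X S" using tS_carrier by blast
  show "inj_on (tensor_S X S) M0"
  proof (rule inj_onI)
    fix a b assume a: "a \<in> M0" and b: "b \<in> M0" and e: "tensor_S X S a = tensor_S X S b"
    have "tensor_dist X d S (tensor_S X S a) (tensor_S X S b) = 0"
      using metricD(3)[OF tS_carrier[OF a] tS_carrier[OF b]] e by simp
    then have h: "\<bar>fst a - fst b\<bar> + \<bar>snd a - snd b\<bar> \<le> 0" using td_S_ge[OF a b] by simp
    have "0 \<le> \<bar>fst a - fst b\<bar>" "0 \<le> \<bar>snd a - snd b\<bar>" by simp_all
    then have "\<bar>fst a - fst b\<bar> = 0" "\<bar>snd a - snd b\<bar> = 0" using h by linarith+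
    then show "a = b" by (simp add: prod_eq_iff)
  qed
  fix i r s :: real
  assume i: "i \<in> {0, 1}" and r: "r \<in> {0..1}" and s: "s \<in> {0..1}"
  have rM: "(i, r) \<in> M0" "(i, s) \<in> M0" "(r, i) \<in> M0" "(s, i) \<in> M0" using i r s unfolding M0_def by auto
  have "tensor_dist X d S (tensor_S X S (i, r)) (tensor_S X S (i, s)) \<le> \<bar>r - s\<bar>"
    by (rule edge_bound[where E="\<lambda>t. (i, t)", OF _ _ r s]) (use i local_a in \<open>auto simp: M0_def\<close>)
  moreover have "\<bar>fst (i, r) - fst (i, s)\<bar> + \<bar>snd (i, r) - snd (i, s)\<bar> \<le> tensor_dist X d S (tensor_S X S (i, r)) (tensor_S X S (i, s))"
    by (rule td_S_ge) (use rM in auto)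
  ultimately show "tensor_dist X d S (tensor_S X S (i, r)) (tensor_S X S (i, s)) = \<bar>s - r\<bar>"
    by (simp add: abs_minus_commute)
  have "tensor_dist X d S (tensor_S X S (r, i)) (tensor_S X S (s, i)) \<le> \<bar>r - s\<bar>"
    by (rule edge_bound[where E="\<lambda>t. (t, i)", OF _ _ r s]) (use i local_b in \<open>auto simp: M0_def\<close>)
  moreover have "\<bar>fst (r, i) - fst (s, i)\<bar> + \<bar>snd (r, i) - snd (s, i)\<bar> \<le> tensor_dist X d S (tensor_S X S (r, i)) (tensor_S X S (s, i))"
    by (rule td_S_ge) (use rM in auto)
  ultimately show "tensor_dist X d S (tensor_S X S (r, i)) (tensor_S X S (s, i)) = \<bar>s - r\<bar>"
    by (simp add: abs_minus_commute)
next
  fix r s t u :: real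
  assume "(r, s) \<in> M0" "(t, u) \<in> M0"
  then show "\<bar>r - t\<bar> + \<bar>s - u\<bar> \<le> tensor_dist X d S (tensor_S X S (r, s)) (tensor_S X S (t, u))"
    using td_S_ge by fastforce
qed

end

lemma map_rel:
  assumes sqX: "squarems X dX SX" and sqY: "squarems Y dY SY"
    and fX: "f ` X \<subseteq> Y" and fS: "\<forall>p\<in>M0. f (SX p) = SY p"
    and ab: "(a, b) \<in> tensor_rel X SX"
  shows "((fst a, f (snd a)), (fst b, f (snd b))) \<in> tensor_rel Y SY"
proof -
  let ?g = "\<lambda>a. (fst a, f (snd a))"
  have bas: "(?g a, ?g b) \<in> basic_rel SY" if abX: "(a, b) \<in> basic_rel SX" for a b
  proof -
    obtain m n p q where h: "a = (m, SX p)" "b = (n, SX q)" "m \<in> Mset" "n \<in> Mset" "adjacent m n" "p \<in> M0" "q \<in> M0"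
      "(fst m + fst p) / 3 = (fst n + fst q) / 3" "(snd m + snd p) / 3 = (snd n + snd q) / 3"
      using abX unfolding basic_rel_def by blast
    have "?g a = (m, SY p)" "?g b = (n, SY q)" using h fS by auto
    then show ?thesis using h unfolding basic_rel_def by blast
  qed
  have tr: "(?g a, ?g b) \<in> (basic_rel SY \<union> (basic_rel SY)\<inverse>)\<^sup>+"
    if "(a, b) \<in> (basic_rel SX \<union> (basic_rel SX)\<inverse>)\<^sup>+" for a b
    using that
  proof (induction rule: trancl_induct)
    case (base y)
    then have "(a, y) \<in> basic_rel SX \<or> (y, a) \<in> basic_rel SX" by blast
    then have "(?g a, ?g y) \<in> basic_rel SY \<or> (?g y, ?g a) \<in> basic_rel SY" using bas by blast
    then show ?case by blast
  next
    case (step y z)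
    then have "(y, z) \<in> basic_rel SX \<or> (z, y) \<in> basic_rel SX" by blast
    then have "(?g y, ?g z) \<in> basic_rel SY \<or> (?g z, ?g y) \<in> basic_rel SY" using bas by blast
    then have "(?g y, ?g z) \<in> (basic_rel SY \<union> (basic_rel SY)\<inverse>)" by blast
    then show ?case using step.IH by (meson trancl.trancl_into_trancl)
  qed
  have "(a, b) \<in> Id_on (Mset \<times> X) \<or> (a, b) \<in> (basic_rel SX \<union> (basic_rel SX)\<inverse>)\<^sup>+"
    using ab unfolding tensor_rel_def by blast
  then show ?thesis
  proof
    assume "(a, b) \<in> Id_on (Mset \<times> X)"
    then have "a = b" "a \<in> Mset \<times> X" by (auto simp: Id_on_def)
    then have "?g a = ?g b" "?g a \<in> Mset \<times> Y" using fX by (auto simp: mem_Times_iff)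
    then show ?thesis unfolding tensor_rel_def by auto
  next
    assume "(a, b) \<in> (basic_rel SX \<union> (basic_rel SX)\<inverse>)\<^sup>+"
    then show ?thesis using tr unfolding tensor_rel_def by blast
  qed
qed

lemma map_class:
  assumes sqX: "squarems X dX SX" and sqY: "squarems Y dY SY"
    and fX: "f ` X \<subseteq> Y" and fS: "\<forall>p\<in>M0. f (SX p) = SY p"
    and m: "m \<in> Mset" and x: "x \<in> X"
  shows "tensor_map Y SY f (tensor_class X SX m x) = tensor_class Y SY m (f x)"
proof -
  interpret SX: sqms X dX SX by (rule sqms.intro[OF sqX])
  interpret SY: sqms Y dY SY by (rule sqms.intro[OF sqY])
  let ?c = "tensor_class X SX m x"
  define z where "z = (SOME z. z \<in> ?c)"
  have mx: "(m, x) \<in> Mset \<times> X" using m x by simp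
  have zc: "z \<in> ?c" unfolding z_def SX.class_eq by (rule someI[of _ "(m, x)"]) (rule SX.class_mem[OF mx])
  then have r: "((m, x), z) \<in> tensor_rel X SX" using SX.class_eq by simp
  then have zA: "z \<in> Mset \<times> X" using SX.R_sub by blast
  have "((m, f x), (fst z, f (snd z))) \<in> tensor_rel Y SY"
    using map_rel[OF sqX sqY fX fS r] by simp
  moreover have "(m, f x) \<in> Mset \<times> Y" "(fst z, f (snd z)) \<in> Mset \<times> Y" using mx zA fX by (auto simp: mem_Times_iff)
  ultimately have "tensor_class Y SY (fst (m, f x)) (snd (m, f x)) = tensor_class Y SY (fst z) (f (snd z))"
    using SY.class_eqI by fastforce
  then show ?thesis unfolding tensor_map_def z_def Let_def by simp
qed

lemma map_cost:
  assumes sqX: "squarems X dX SX" and sqY: "squarems Y dY SY"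
    and fX: "f ` X \<subseteq> Y" and fS: "\<forall>p\<in>M0. f (SX p) = SY p"
    and fL: "\<forall>x\<in>X. \<forall>y\<in>X. dY (f x) (f y) \<le> dX x y"
  shows "set zs \<subseteq> Mset \<times> X \<Longrightarrow> chain_cost (tensor_rel Y SY) dY (map (\<lambda>a. (fst a, f (snd a))) zs) \<le> chain_cost (tensor_rel X SX) dX zs"
proof (induction zs rule: induct_list012)
  case (3 a b zs)
  interpret SY: sqms Y dY SY by (rule sqms.intro[OF sqY])
  let ?g = "\<lambda>a. (fst a, f (snd a))"
  have ab: "a \<in> Mset \<times> X" "b \<in> Mset \<times> X" using 3(3) by auto
  have gab: "?g a \<in> Mset \<times> Y" "?g b \<in> Mset \<times> Y" using ab fX by (auto simp: mem_Times_iff)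
  have step: "(if (?g a, ?g b) \<in> tensor_rel Y SY then 0 else pre_dist dY (?g a) (?g b))
      \<le> (if (a, b) \<in> tensor_rel X SX then 0 else pre_dist dX a b)"
  proof (cases "(a, b) \<in> tensor_rel X SX")
    case True
    then have "(?g a, ?g b) \<in> tensor_rel Y SY" by (rule map_rel[OF sqX sqY fX fS])
    then show ?thesis using True by simp
  next
    case False
    have "pre_dist dY (?g a) (?g b) \<le> pre_dist dX a b"
      unfolding pre_dist_def using fL ab by (auto simp: mem_Times_iff)
    moreover have "0 \<le> pre_dist dY (?g a) (?g b)" by (rule SY.pre_nonneg[OF gab])
    ultimately show ?thesis using False by auto
  qed
  have "chain_cost (tensor_rel Y SY) dY (map ?g (b # zs)) \<le> chain_cost (tensor_rel X SX) dX (b # zs)"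
    using 3 by simp
  then show ?case using step by simp
qed auto

lemma map_hom:
  assumes sqX: "squarems X dX SX" and sqY: "squarems Y dY SY" and h: "squams_hom X dX SX Y dY SY f"
  shows "squams_hom (tensor_carrier X SX) (tensor_dist X dX SX) (tensor_S X SX)
                 (tensor_carrier Y SY) (tensor_dist Y dY SY) (tensor_S Y SY) (tensor_map Y SY f)"
proof -
  interpret SX: sqms X dX SX by (rule sqms.intro[OF sqX])
  interpret SY: sqms Y dY SY by (rule sqms.intro[OF sqY])
  have fX: "f ` X \<subseteq> Y" and fL: "\<forall>x\<in>X. \<forall>y\<in>X. dY (f x) (f y) \<le> dX x y" and fS: "\<forall>p\<in>M0. f (SX p) = SY p"
    using h unfolding squams_hom_def by blast+
  let ?g = "\<lambda>a. (fst a, f (snd a))"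
  have mapc: "tensor_map Y SY f (tensor_class X SX (fst z) (snd z)) = tensor_class Y SY (fst (?g z)) (snd (?g z))"
    if "z \<in> Mset \<times> X" for z using map_class[OF sqX sqY fX fS, of "fst z" "snd z"] that by (auto simp: mem_Times_iff)
  have gA: "?g z \<in> Mset \<times> Y" if "z \<in> Mset \<times> X" for z using that fX by (auto simp: mem_Times_iff)
  show ?thesis unfolding squams_hom_def
  proof (intro conjI ballI subsetI)
    fix c' assume "c' \<in> tensor_map Y SY f ` tensor_carrier X SX"
    then obtain c where c: "c \<in> tensor_carrier X SX" "c' = tensor_map Y SY f c" by blast
    obtain z where z: "z \<in> Mset \<times> X" "c = tensor_class X SX (fst z) (snd z)" using SX.carrier_E[OF c(1)] by blast
    have "c' = tensor_class Y SY (fst (?g z)) (snd (?g z))" using c z mapc by simp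
    then show "c' \<in> tensor_carrier Y SY" using SY.carrier_I[OF gA[OF z(1)]] by simp
  next
    fix c c' assume c: "c \<in> tensor_carrier X SX" and c': "c' \<in> tensor_carrier X SX"
    obtain z where z: "z \<in> Mset \<times> X" "c = tensor_class X SX (fst z) (snd z)" using SX.carrier_E[OF c] by blast
    obtain w where w: "w \<in> Mset \<times> X" "c' = tensor_class X SX (fst w) (snd w)" using SX.carrier_E[OF c'] by blast
    have "rep_dist Y dY SY (?g z) (?g w) \<le> rep_dist X dX SX z w"
    proof (rule SX.rd_greatest[OF z(1) w(1)])
      fix zs assume zs: "zs \<noteq> []" "set zs \<subseteq> Mset \<times> X" "hd zs = z" "last zs = w"
      have "rep_dist Y dY SY (?g z) (?g w) \<le> chain_cost (tensor_rel Y SY) dY (map ?g zs)"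
        by (rule SY.rd_lower) (use zs gA in \<open>auto simp: hd_map last_map\<close>)
      also have "\<dots> \<le> chain_cost (tensor_rel X SX) dX zs" by (rule map_cost[OF sqX sqY fX fS fL zs(2)])
      finally show "rep_dist Y dY SY (?g z) (?g w) \<le> chain_cost (tensor_rel X SX) dX zs" .
    qed
    moreover have "tensor_map Y SY f c = tensor_class Y SY (fst (?g z)) (snd (?g z))" using z mapc by simp
    moreover have "tensor_map Y SY f c' = tensor_class Y SY (fst (?g w)) (snd (?g w))" using w mapc by simp
    moreover have "tensor_dist Y dY SY (tensor_class Y SY (fst (?g z)) (snd (?g z))) (tensor_class Y SY (fst (?g w)) (snd (?g w)))
       = rep_dist Y dY SY (?g z) (?g w)" by (rule SY.td_class[OF gA[OF z(1)] gA[OF w(1)]])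
    moreover have "tensor_dist X dX SX c c' = rep_dist X dX SX z w" using z w SX.td_class by simp
    ultimately show "tensor_dist Y dY SY (tensor_map Y SY f c) (tensor_map Y SY f c') \<le> tensor_dist X dX SX c c'"
      by simp
  next
    fix p assume p: "p \<in> M0"
    obtain m where m: "m \<in> Mset" "p \<in> cell m" using cell_exists[OF p] by blast
    let ?r = "(3 * fst p - fst m, 3 * snd p - snd m)"
    have r: "?r \<in> M0" by (rule cell_M0[OF p m(1) m(2)])
    have "tensor_map Y SY f (tensor_S X SX p) = tensor_map Y SY f (tensor_class X SX m (SX ?r))"
      using SX.tS_eq[OF p m] by simp
    also have "\<dots> = tensor_class Y SY m (f (SX ?r))" by (rule map_class[OF sqX sqY fX fS m(1) SX.S_in[OF r]])
    also have "\<dots> = tensor_class Y SY m (SY ?r)" using fS r by simp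
    also have "\<dots> = tensor_S Y SY p" using SY.tS_eq[OF p m] by simp
    finally show "tensor_map Y SY f (tensor_S X SX p) = tensor_S Y SY p" .
  qed
qed


theorem mainTheorem10:
  shows
  "(\<forall>(X :: 'a set) d S. squarems X d S \<longrightarrow>
      metric_on (tensor_carrier X S) (tensor_dist X d S) \<and>
      (\<forall>z\<in>Mset \<times> X. \<forall>w\<in>Mset \<times> X.
         tensor_dist X d S (tensor_class X S (fst z) (snd z)) (tensor_class X S (fst w) (snd w))
           = rep_dist X d S z w) \<and>
      (\<forall>p\<in>M0. \<forall>m\<in>Mset. p \<in> cell m \<longrightarrow>
         tensor_S X S p = tensor_class X S m (S (3 * fst p - fst m, 3 * snd p - snd m))) \<and>
      squarems (tensor_carrier X S) (tensor_dist X d S) (tensor_S X S) \<and>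
      (\<forall>c\<in>tensor_carrier X S. tensor_map X S id c = c))
   \<and>
   (\<forall>(X :: 'a set) dX SX (Y :: 'b set) dY SY f.
      squarems X dX SX \<and> squarems Y dY SY \<and> squams_hom X dX SX Y dY SY f \<longrightarrow>
      (\<forall>m\<in>Mset. \<forall>x\<in>X. tensor_map Y SY f (tensor_class X SX m x) = tensor_class Y SY m (f x)) \<and>
      squams_hom (tensor_carrier X SX) (tensor_dist X dX SX) (tensor_S X SX)
                 (tensor_carrier Y SY) (tensor_dist Y dY SY) (tensor_S Y SY)
                 (tensor_map Y SY f))
   \<and>
   (\<forall>(X :: 'a set) dX SX (Y :: 'b set) dY SY (Z :: 'c set) dZ SZ f g.
      squarems X dX SX \<and> squarems Y dY SY \<and> squarems Z dZ SZ \<and>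
      squams_hom X dX SX Y dY SY f \<and> squams_hom Y dY SY Z dZ SZ g \<longrightarrow>
      (\<forall>c\<in>tensor_carrier X SX.
         tensor_map Z SZ (g \<circ> f) c = tensor_map Z SZ g (tensor_map Y SY f c)))"
  proof (intro conjI allI impI)
  fix X :: "'a set" and d S
  assume sq: "squarems X d S"
  interpret SX: sqms X d S by (rule sqms.intro[OF sq])
  show "metric_on (tensor_carrier X S) (tensor_dist X d S)" by (rule SX.metric)
  show "\<forall>z\<in>Mset \<times> X. \<forall>w\<in>Mset \<times> X.
         tensor_dist X d S (tensor_class X S (fst z) (snd z)) (tensor_class X S (fst w) (snd w))
           = rep_dist X d S z w" using SX.td_class by blast
  show "\<forall>p\<in>M0. \<forall>m\<in>Mset. p \<in> cell m \<longrightarrow>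
         tensor_S X S p = tensor_class X S m (S (3 * fst p - fst m, 3 * snd p - snd m))"
    using SX.tS_eq by blast
  show "squarems (tensor_carrier X S) (tensor_dist X d S) (tensor_S X S)" by (rule SX.tensor_squarems)
  show "\<forall>c\<in>tensor_carrier X S. tensor_map X S id c = c"
  proof
    fix c assume c: "c \<in> tensor_carrier X S"
    obtain z where z: "z \<in> Mset \<times> X" "c = tensor_class X S (fst z) (snd z)" using SX.carrier_E[OF c] by blast
    have "tensor_map X S id (tensor_class X S (fst z) (snd z)) = tensor_class X S (fst z) (id (snd z))"
      by (rule map_class[OF sq sq]) (use z in \<open>auto simp: mem_Times_iff\<close>)
    then show "tensor_map X S id c = c" using z by simp
  qed
next
  fix X :: "'a set" and dX SX and Y :: "'b set" and dY SY f
  assume h: "squarems X dX SX \<and> squarems Y dY SY \<and> squams_hom X dX SX Y dY SY f"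
  then have sqX: "squarems X dX SX" and sqY: "squarems Y dY SY" and hf: "squams_hom X dX SX Y dY SY f" by auto
  have fX: "f ` X \<subseteq> Y" and fS: "\<forall>p\<in>M0. f (SX p) = SY p"
    using hf unfolding squams_hom_def by blast+
  show "\<forall>m\<in>Mset. \<forall>x\<in>X. tensor_map Y SY f (tensor_class X SX m x) = tensor_class Y SY m (f x)"
    using map_class[OF sqX sqY fX fS] by blast
  show "squams_hom (tensor_carrier X SX) (tensor_dist X dX SX) (tensor_S X SX)
                 (tensor_carrier Y SY) (tensor_dist Y dY SY) (tensor_S Y SY)
                 (tensor_map Y SY f)" by (rule map_hom[OF sqX sqY hf])
next
  fix X :: "'a set" and dX SX and Y :: "'b set" and dY SY and Z :: "'c set" and dZ SZ f g
  assume h: "squarems X dX SX \<and> squarems Y dY SY \<and> squarems Z dZ SZ \<and>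
      squams_hom X dX SX Y dY SY f \<and> squams_hom Y dY SY Z dZ SZ g"
  then have sqX: "squarems X dX SX" and sqY: "squarems Y dY SY" and sqZ: "squarems Z dZ SZ"
    and hf: "squams_hom X dX SX Y dY SY f" and hg: "squams_hom Y dY SY Z dZ SZ g" by auto
  have fX: "f ` X \<subseteq> Y" and fS: "\<forall>p\<in>M0. f (SX p) = SY p"
    using hf unfolding squams_hom_def by blast+
  have gY: "g ` Y \<subseteq> Z" and gS: "\<forall>p\<in>M0. g (SY p) = SZ p"
    using hg unfolding squams_hom_def by blast+
  have gfX: "(g \<circ> f) ` X \<subseteq> Z" using fX gY by auto
  have gfS: "\<forall>p\<in>M0. (g \<circ> f) (SX p) = SZ p" using fS gS by simp
  interpret SX: sqms X dX SX by (rule sqms.intro[OF sqX])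
  show "\<forall>c\<in>tensor_carrier X SX. tensor_map Z SZ (g \<circ> f) c = tensor_map Z SZ g (tensor_map Y SY f c)"
  proof
    fix c assume c: "c \<in> tensor_carrier X SX"
    obtain z where z: "z \<in> Mset \<times> X" "c = tensor_class X SX (fst z) (snd z)" using SX.carrier_E[OF c] by blast
    have m: "fst z \<in> Mset" and x: "snd z \<in> X" using z by (auto simp: mem_Times_iff)
    have fx: "f (snd z) \<in> Y" using fX x by blast
    have "tensor_map Y SY f c = tensor_class Y SY (fst z) (f (snd z))"
      using map_class[OF sqX sqY fX fS m x] z by simp
    moreover have "tensor_map Z SZ g (tensor_class Y SY (fst z) (f (snd z))) = tensor_class Z SZ (fst z) (g (f (snd z)))"
      using map_class[OF sqY sqZ gY gS m fx] by simp
    moreover have "tensor_map Z SZ (g \<circ> f) c = tensor_class Z SZ (fst z) ((g \<circ> f) (snd z))"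
      using map_class[OF sqX sqZ gfX gfS m x] z by (simp only:)
    ultimately show "tensor_map Z SZ (g \<circ> f) c = tensor_map Z SZ g (tensor_map Y SY f c)" by simp
  qed
qed

end
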